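(* Let $u$ and $v$ be two prime words such that $u<_{lex}v$. Then $u^\alpha<_{lex}u^\alpha v\le_{lex}v$ for every ordinal $\alpha$.
   Context: $A$ is a finite alphabet with a linear order $<_A$. Words are sequences of letters indexed by countable ordinals, $x^\alpha$ is the concatenation of $\alpha$ copies of $x$. A suffix of $x$ is $x[\gamma,|x|)$, proper if $0<\gamma<|x|$. Write $x<_{str}x'$ if there are letters $a<_Ab$ and words $y,z,z'$ with $x=yaz$, $x'=ybz'$; $x\le_{lex}x'$ iff $x$ is a prefix of $x'$ or $x<_{str}x'$; $<_{lex}$ is its strict version. A word is primitive if $x=y^\alpha$ implies $\alpha=1$ and $y=x$; $w$ is prime if it is primitive and every proper suffix $z$ satisfies $w\le_{lex}z$. *)

theory Defs
  imports Main "HOL-Library.Nat_Bijection"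
begin

text \<open>Transfinite words: positions form a well-ordered subset of nat (hence a
countable ordinal), given by a well-order relation; letters assigned to positions.
Two representations denote the same word iff they are letter-preserving order-isomorphic.\<close>

type_synonym 'a tword = "nat rel \<times> (nat \<Rightarrow> 'a)"

definition is_word :: "'a tword \<Rightarrow> bool" where
  "is_word x \<longleftrightarrow> Well_order (fst x)"

definition word_eq :: "'a tword \<Rightarrow> 'a tword \<Rightarrow> bool" where
  "word_eq x y \<longleftrightarrow> (\<exists>f. iso (fst x) (fst y) f \<and> (\<forall>i\<in>Field (fst x). snd y (f i) = snd x i))"

definition empty_word :: "'a tword \<Rightarrow> bool" where
  "empty_word x \<longleftrightarrow> Field (fst x) = {}"

definition letter :: "'a \<Rightarrow> 'a tword" where
  "letter a = ({(0,0)}, \<lambda>_. a)"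

definition wconcat :: "'a tword \<Rightarrow> 'a tword \<Rightarrow> 'a tword" where
  "wconcat x y =
     ({(2*i, 2*j) | i j. (i,j) \<in> fst x} \<union> {(2*i+1, 2*j+1) | i j. (i,j) \<in> fst y}
      \<union> {(2*i, 2*j+1) | i j. i \<in> Field (fst x) \<and> j \<in> Field (fst y)},
      \<lambda>n. if even n then snd x (n div 2) else snd y (n div 2))"

text \<open>Power x^alpha for a countable ordinal alpha (a well-order on a subset of nat):
  alpha copies of x, position p of copy k encoded as prod_encode (k,p).\<close>
definition wpow :: "'a tword \<Rightarrow> nat rel \<Rightarrow> 'a tword" where
  "wpow x \<alpha> =
     ({(prod_encode (k,p), prod_encode (k',p')) | k p k' p'.
         k \<in> Field \<alpha> \<and> k' \<in> Field \<alpha> \<and> p \<in> Field (fst x) \<and> p' \<in> Field (fst x) \<and>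
         ((k \<noteq> k' \<and> (k,k') \<in> \<alpha>) \<or> (k = k' \<and> (p,p') \<in> fst x))},
      \<lambda>n. snd x (snd (prod_decode n)))"

definition is_prefix :: "'a tword \<Rightarrow> 'a tword \<Rightarrow> bool" where
  "is_prefix x x' \<longleftrightarrow> (\<exists>z. is_word z \<and> word_eq x' (wconcat x z))"

definition str_less :: "'a::linorder tword \<Rightarrow> 'a tword \<Rightarrow> bool" where
  "str_less x x' \<longleftrightarrow> (\<exists>y a b z z'. a < b \<and> is_word y \<and> is_word z \<and> is_word z' \<and>
      word_eq x (wconcat y (wconcat (letter a) z)) \<and> word_eq x' (wconcat y (wconcat (letter b) z')))"

definition lex_le :: "'a::linorder tword \<Rightarrow> 'a tword \<Rightarrow> bool" where
  "lex_le x x' \<longleftrightarrow> is_prefix x x' \<or> str_less x x'"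

definition lex_less :: "'a::linorder tword \<Rightarrow> 'a tword \<Rightarrow> bool" where
  "lex_less x x' \<longleftrightarrow> lex_le x x' \<and> \<not> word_eq x x'"

text \<open>z is a proper suffix x[gamma,|x|) with 0 < gamma < |x|, i.e. x = y z with y, z nonempty.\<close>
definition proper_suffix :: "'a tword \<Rightarrow> 'a tword \<Rightarrow> bool" where
  "proper_suffix z x \<longleftrightarrow> is_word z \<and> \<not> empty_word z \<and>
     (\<exists>y. is_word y \<and> \<not> empty_word y \<and> word_eq x (wconcat y z))"

definition primitive :: "'a tword \<Rightarrow> bool" where
  "primitive x \<longleftrightarrow> (\<forall>y \<alpha>. is_word y \<and> Well_order \<alpha> \<and> word_eq x (wpow y \<alpha>) \<longrightarrow>
      card (Field \<alpha>) = 1 \<and> word_eq y x)"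

definition prime_word :: "'a::linorder tword \<Rightarrow> bool" where
  "prime_word w \<longleftrightarrow> is_word w \<and> primitive w \<and> (\<forall>z. proper_suffix z w \<longrightarrow> lex_le w z)"

end

theory Submission
  imports Defs
begin



definition sub :: "'a tword \<Rightarrow> nat set \<Rightarrow> 'a tword" where
  "sub x S = (Restr (fst x) S, snd x)"

definition wmap :: "'a tword \<Rightarrow> 'a tword \<Rightarrow> (nat \<Rightarrow> nat) \<Rightarrow> bool" where
  "wmap x y g \<longleftrightarrow> bij_betw g (Field (fst x)) (Field (fst y)) \<and>
     (\<forall>a\<in>Field (fst x). \<forall>b\<in>Field (fst x). (a,b) \<in> fst x \<longleftrightarrow> (g a, g b) \<in> fst y) \<and>
     (\<forall>a\<in>Field (fst x). snd y (g a) = snd x a)"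

lemma word_eq_iff: "word_eq x y \<longleftrightarrow> (\<exists>g. wmap x y g)"
  unfolding word_eq_def wmap_def iso_iff2 by blast

lemma WO_refl: "Well_order r \<Longrightarrow> a \<in> Field r \<Longrightarrow> (a,a) \<in> r"
  by (simp add: well_order_on_def linear_order_on_def partial_order_on_def preorder_on_def refl_on_def)

lemma WO_trans: "Well_order r \<Longrightarrow> (a,b) \<in> r \<Longrightarrow> (b,c) \<in> r \<Longrightarrow> (a,c) \<in> r"
  unfolding well_order_on_def linear_order_on_def partial_order_on_def preorder_on_def trans_def by blast

lemma WO_antisym: "Well_order r \<Longrightarrow> (a,b) \<in> r \<Longrightarrow> (b,a) \<in> r \<Longrightarrow> a = b"
  unfolding well_order_on_def linear_order_on_def partial_order_on_def antisym_def by blast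

lemma WO_total: "Well_order r \<Longrightarrow> a \<in> Field r \<Longrightarrow> b \<in> Field r \<Longrightarrow> (a,b) \<in> r \<or> (b,a) \<in> r"
  apply (cases "a = b")
   apply (simp add: WO_refl)
  unfolding well_order_on_def linear_order_on_def total_on_def by blast

lemma WO_least: "Well_order r \<Longrightarrow> A \<subseteq> Field r \<Longrightarrow> A \<noteq> {} \<Longrightarrow> \<exists>a\<in>A. \<forall>a'\<in>A. (a,a') \<in> r"
  using Linear_order_Well_order_iff well_order_on_def by blast

lemma Field_Restr_WO: assumes "Well_order r" shows "Field (Restr r S) = S \<inter> Field r"
proof
  show "Field (Restr r S) \<subseteq> S \<inter> Field r" by (auto simp: Field_def)
  show "S \<inter> Field r \<subseteq> Field (Restr r S)"
  proof
    fix a assume "a \<in> S \<inter> Field r"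
    with assms have "(a,a) \<in> Restr r S" using WO_refl[of r a] by simp
    thus "a \<in> Field (Restr r S)" by (rule FieldI1)
  qed
qed

lemma sub_Field[simp]: "sub x (Field (fst x)) = x"
  by (cases x) (simp add: sub_def Restr_Field)

lemma sub_sub: "T \<subseteq> S \<Longrightarrow> sub (sub x S) T = sub x T"
  by (auto simp: sub_def)

lemma fst_sub: "fst (sub x S) = Restr (fst x) S" and snd_sub[simp]: "snd (sub x S) = snd x"
  by (auto simp: sub_def)

lemma word_sub: "is_word x \<Longrightarrow> is_word (sub x S)"
  by (simp add: is_word_def sub_def Well_order_Restr)

lemma Field_sub: "is_word x \<Longrightarrow> Field (fst (sub x S)) = S \<inter> Field (fst x)"
  by (simp add: is_word_def fst_sub Field_Restr_WO)

lemma weq_sub: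
  assumes "is_word x" "is_word y" "S \<subseteq> Field (fst x)" "T \<subseteq> Field (fst y)"
    "bij_betw f S T"
    "\<And>a b. a \<in> S \<Longrightarrow> b \<in> S \<Longrightarrow> (a,b) \<in> fst x \<longleftrightarrow> (f a, f b) \<in> fst y"
    "\<And>a. a \<in> S \<Longrightarrow> snd y (f a) = snd x a"
  shows "word_eq (sub x S) (sub y T)"
proof -
  have FS: "Field (fst (sub x S)) = S" "Field (fst (sub y T)) = T"
    using assms Field_sub by blast+
  have "wmap (sub x S) (sub y T) f"
    unfolding wmap_def FS using assms(5-7) assms(5)[unfolded bij_betw_def]
    by (auto simp: fst_sub)
  thus ?thesis using word_eq_iff by blast
qed

lemma weq_full:
  assumes "is_word x" "is_word y"
    "bij_betw f (Field (fst x)) (Field (fst y))"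
    "\<And>a b. a \<in> Field (fst x) \<Longrightarrow> b \<in> Field (fst x) \<Longrightarrow> (a,b) \<in> fst x \<longleftrightarrow> (f a, f b) \<in> fst y"
    "\<And>a. a \<in> Field (fst x) \<Longrightarrow> snd y (f a) = snd x a"
  shows "word_eq x y"
  using weq_sub[OF assms(1,2) order_refl order_refl assms(3-5)] by simp

lemma weq_refl: "is_word x \<Longrightarrow> word_eq x x"
  by (rule weq_full[where f=id]) auto

lemma weq_sym: assumes "word_eq x y" shows "word_eq y x"
proof -
  obtain g where g: "wmap x y g" using assms word_eq_iff by blast
  let ?h = "inv_into (Field (fst x)) g"
  have b: "bij_betw ?h (Field (fst y)) (Field (fst x))"
    using g unfolding wmap_def by (simp add: bij_betw_inv_into)
  have gg: "\<And>a. a \<in> Field (fst y) \<Longrightarrow> g (?h a) = a \<and> ?h a \<in> Field (fst x)"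
    using g unfolding wmap_def bij_betw_def by (auto simp: f_inv_into_f inv_into_into)
  have "wmap y x ?h" unfolding wmap_def
  proof (intro conjI ballI)
    show "bij_betw ?h (Field (fst y)) (Field (fst x))" by (rule b)
  next
    fix a b assume "a \<in> Field (fst y)" "b \<in> Field (fst y)"
    thus "((a, b) \<in> fst y) = ((?h a, ?h b) \<in> fst x)" using gg g unfolding wmap_def by metis
  next
    fix a assume "a \<in> Field (fst y)"
    thus "snd x (?h a) = snd y a" using gg g unfolding wmap_def by metis
  qed
  thus ?thesis using word_eq_iff by blast
qed

lemma weq_trans: assumes "word_eq x y" "word_eq y z" shows "word_eq x z"
proof -
  obtain g where g: "wmap x y g" using assms word_eq_iff by blast
  obtain h where h: "wmap y z h" using assms word_eq_iff by blast
  have gi: "\<And>a. a \<in> Field (fst x) \<Longrightarrow> g a \<in> Field (fst y)"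
    using g unfolding wmap_def bij_betw_def by blast
  have "wmap x z (h \<circ> g)" unfolding wmap_def
  proof (intro conjI ballI)
    show "bij_betw (h \<circ> g) (Field (fst x)) (Field (fst z))"
      using g h unfolding wmap_def using bij_betw_trans by blast
  next
    fix a b assume "a \<in> Field (fst x)" "b \<in> Field (fst x)"
    thus "((a, b) \<in> fst x) = (((h \<circ> g) a, (h \<circ> g) b) \<in> fst z)"
      using gi g h unfolding wmap_def by simp
  next
    fix a assume "a \<in> Field (fst x)"
    thus "snd z ((h \<circ> g) a) = snd x a" using gi g h unfolding wmap_def by simp
  qed
  thus ?thesis using word_eq_iff by blast
qed




lemma WO_intro:
  assumes tr: "\<And>a b c. (a,b) \<in> r \<Longrightarrow> (b,c) \<in> r \<Longrightarrow> (a,c) \<in> r"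
    and an: "\<And>a b. (a,b) \<in> r \<Longrightarrow> (b,a) \<in> r \<Longrightarrow> a = b"
    and le: "\<And>A. A \<subseteq> Field r \<Longrightarrow> A \<noteq> {} \<Longrightarrow> \<exists>a\<in>A. \<forall>a'\<in>A. (a,a') \<in> r"
  shows "Well_order r"
proof -
  have rf: "refl_on (Field r) r" unfolding refl_on_def
  proof
    fix a assume "a \<in> Field r" thus "(a,a) \<in> r" using le[of "{a}"] by auto
  qed
  have tot: "total_on (Field r) r" unfolding total_on_def
  proof (intro ballI impI)
    fix a b assume "a \<in> Field r" "b \<in> Field r" "a \<noteq> b"
    thus "(a, b) \<in> r \<or> (b, a) \<in> r" using le[of "{a,b}"] by auto
  qed
  have sub: "r \<subseteq> Field r \<times> Field r" by (auto intro: FieldI1 FieldI2)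
  have LO: "Linear_order r"
    unfolding linear_order_on_def partial_order_on_def preorder_on_def
    using rf tot sub tr an unfolding trans_def antisym_def by blast
  show ?thesis using Linear_order_Well_order_iff[OF LO] le by blast
qed

lemma wc_mem: "(m, n) \<in> fst (wconcat x y) \<longleftrightarrow>
   (even m \<and> even n \<and> (m div 2, n div 2) \<in> fst x) \<or>
   (odd m \<and> odd n \<and> (m div 2, n div 2) \<in> fst y) \<or>
   (even m \<and> odd n \<and> m div 2 \<in> Field (fst x) \<and> n div 2 \<in> Field (fst y))"
  unfolding wconcat_def fst_conv
  apply (rule iffI)
   apply auto[1]
  apply (elim disjE conjE)
    apply (rule UnI1, rule UnI1, rule CollectI, rule exI[of _ "m div 2"], rule exI[of _ "n div 2"], simp add: dvd_mult_div_cancel)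
   apply (rule UnI1, rule UnI2, rule CollectI, rule exI[of _ "m div 2"], rule exI[of _ "n div 2"], simp add: odd_two_times_div_two_succ)
  apply (rule UnI2, rule CollectI, rule exI[of _ "m div 2"], rule exI[of _ "n div 2"], simp add: dvd_mult_div_cancel odd_two_times_div_two_succ)
  done

lemma wc_snd: "snd (wconcat x y) n = (if even n then snd x (n div 2) else snd y (n div 2))"
  by (simp add: wconcat_def)

lemma wc_Field: "n \<in> Field (fst (wconcat x y)) \<longleftrightarrow>
   (even n \<and> n div 2 \<in> Field (fst x)) \<or> (odd n \<and> n div 2 \<in> Field (fst y))"
proof
  assume "n \<in> Field (fst (wconcat x y))"
  then obtain m where "(n,m) \<in> fst (wconcat x y) \<or> (m,n) \<in> fst (wconcat x y)"
    unfolding Field_def by blast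
  thus "(even n \<and> n div 2 \<in> Field (fst x)) \<or> (odd n \<and> n div 2 \<in> Field (fst y))"
    unfolding wc_mem by (auto intro: FieldI1 FieldI2)
next
  assume A: "(even n \<and> n div 2 \<in> Field (fst x)) \<or> (odd n \<and> n div 2 \<in> Field (fst y))"
  show "n \<in> Field (fst (wconcat x y))"
  proof (cases "even n")
    case True
    with A obtain m where "(n div 2, m) \<in> fst x \<or> (m, n div 2) \<in> fst x" unfolding Field_def by auto
    hence "(n, 2*m) \<in> fst (wconcat x y) \<or> (2*m, n) \<in> fst (wconcat x y)"
      unfolding wc_mem using True by auto
    thus ?thesis by (auto intro: FieldI1 FieldI2)
  next
    case False
    with A obtain m where "(n div 2, m) \<in> fst y \<or> (m, n div 2) \<in> fst y" unfolding Field_def by auto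
    hence "(n, 2*m+1) \<in> fst (wconcat x y) \<or> (2*m+1, n) \<in> fst (wconcat x y)"
      unfolding wc_mem using False by auto
    thus ?thesis by (auto intro: FieldI1 FieldI2)
  qed
qed

lemma word_wc: assumes "is_word x" "is_word y" shows "is_word (wconcat x y)"
  unfolding is_word_def
proof (rule WO_intro)
  have X: "Well_order (fst x)" and Y: "Well_order (fst y)" using assms unfolding is_word_def by auto
  show "(a, c) \<in> fst (wconcat x y)" if "(a, b) \<in> fst (wconcat x y)" "(b, c) \<in> fst (wconcat x y)" for a b c
    using that unfolding wc_mem using WO_trans[OF X] WO_trans[OF Y]
    by (auto intro: FieldI1 FieldI2)
  show "a = b" if "(a, b) \<in> fst (wconcat x y)" "(b, a) \<in> fst (wconcat x y)" for a b
  proof -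
    have "a div 2 = b div 2 \<and> (even a = even b)"
      using that unfolding wc_mem using WO_antisym[OF X] WO_antisym[OF Y] by auto
    thus ?thesis by (metis div_mult_mod_eq mod2_eq_if)
  qed
  show "\<exists>a\<in>A. \<forall>a'\<in>A. (a, a') \<in> fst (wconcat x y)" if "A \<subseteq> Field (fst (wconcat x y))" "A \<noteq> {}" for A
  proof (cases "\<exists>a\<in>A. even a")
    case True
    let ?E = "{i. 2*i \<in> A}"
    have "?E \<subseteq> Field (fst x)"
    proof
      fix i assume "i \<in> ?E" hence "2*i \<in> Field (fst (wconcat x y))" using that(1) by auto
      thus "i \<in> Field (fst x)" unfolding wc_Field by simp
    qed
    moreover have "?E \<noteq> {}" using True by (auto elim!: evenE)
    ultimately obtain i where i: "i \<in> ?E" "\<forall>i'\<in>?E. (i,i') \<in> fst x" using WO_least[OF X] by blast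
    have "\<forall>a'\<in>A. (2*i, a') \<in> fst (wconcat x y)"
    proof
      fix a' assume a': "a' \<in> A"
      show "(2*i, a') \<in> fst (wconcat x y)"
      proof (cases "even a'")
        case True
        hence "a' div 2 \<in> ?E" using a' by auto
        thus ?thesis using i True unfolding wc_mem by auto
      next
        case False
        have "a' \<in> Field (fst (wconcat x y))" using a' that(1) by auto
        hence "a' div 2 \<in> Field (fst y)" using False unfolding wc_Field by simp
        moreover have "i \<in> Field (fst x)" using i by (auto intro: FieldI1)
        ultimately show ?thesis using False unfolding wc_mem by auto
      qed
    qed
    thus ?thesis using i by blast
  next
    case False
    let ?E = "{i. 2*i+1 \<in> A}"
    have "?E \<subseteq> Field (fst y)"
    proof
      fix i assume "i \<in> ?E" hence "2*i+1 \<in> Field (fst (wconcat x y))" using that(1) by auto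
      thus "i \<in> Field (fst y)" unfolding wc_Field by simp
    qed
    moreover have "?E \<noteq> {}" using False that(2) by (auto elim!: oddE)
    ultimately obtain i where i: "i \<in> ?E" "\<forall>i'\<in>?E. (i,i') \<in> fst y" using WO_least[OF Y] by blast
    have "\<forall>a'\<in>A. (2*i+1, a') \<in> fst (wconcat x y)"
    proof
      fix a' assume a': "a' \<in> A"
      hence "odd a'" using False by blast
      hence "a' div 2 \<in> ?E" using a' by (auto elim!: oddE)
      thus "(2*i+1, a') \<in> fst (wconcat x y)" using i \<open>odd a'\<close> unfolding wc_mem by auto
    qed
    thus ?thesis using i by blast
  qed
qed




lemma wc_ee[simp]: "(2*i, 2*j) \<in> fst (wconcat x y) \<longleftrightarrow> (i,j) \<in> fst x"
  by (simp add: wc_mem)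
lemma wc_oo[simp]: "(Suc (2*i), Suc (2*j)) \<in> fst (wconcat x y) \<longleftrightarrow> (i,j) \<in> fst y"
  by (simp add: wc_mem)
lemma wc_eo[simp]: "(2*i, Suc (2*j)) \<in> fst (wconcat x y) \<longleftrightarrow> i \<in> Field (fst x) \<and> j \<in> Field (fst y)"
  by (simp add: wc_mem)
lemma wc_oe[simp]: "(Suc (2*i), 2*j) \<notin> fst (wconcat x y)"
  by (simp add: wc_mem)
lemma wcF_e[simp]: "2*i \<in> Field (fst (wconcat x y)) \<longleftrightarrow> i \<in> Field (fst x)"
  by (simp add: wc_Field)
lemma wcF_o[simp]: "Suc (2*i) \<in> Field (fst (wconcat x y)) \<longleftrightarrow> i \<in> Field (fst y)"
  by (simp add: wc_Field)
lemma wcs_e[simp]: "snd (wconcat x y) (2*i) = snd x i"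
  by (simp add: wc_snd)
lemma wcs_o[simp]: "snd (wconcat x y) (Suc (2*i)) = snd y i"
  by (simp add: wc_snd)

lemma wcF_cases:
  assumes "n \<in> Field (fst (wconcat x y))"
  obtains i where "n = 2*i" "i \<in> Field (fst x)" | j where "n = Suc (2*j)" "j \<in> Field (fst y)"
  using assms unfolding wc_Field
  by (metis dvd_mult_div_cancel odd_two_times_div_two_succ Suc_eq_plus1)

definition dc :: "nat rel \<Rightarrow> nat set \<Rightarrow> bool" where
  "dc r S \<longleftrightarrow> S \<subseteq> Field r \<and> (\<forall>a b. (a,b) \<in> r \<longrightarrow> b \<in> S \<longrightarrow> a \<in> S)"

lemma weq_cong:
  assumes "word_eq x x'" "word_eq y y'"
  shows "word_eq (wconcat x y) (wconcat x' y')"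
proof -
  obtain g where g: "wmap x x' g" using assms word_eq_iff by blast
  obtain h where h: "wmap y y' h" using assms word_eq_iff by blast
  obtain g' where g': "\<forall>a\<in>Field (fst x). g a \<in> Field (fst x') \<and> g' (g a) = a"
     "\<forall>b\<in>Field (fst x'). g' b \<in> Field (fst x) \<and> g (g' b) = b"
    using g unfolding wmap_def bij_betw_iff_bijections by blast
  obtain h' where h': "\<forall>a\<in>Field (fst y). h a \<in> Field (fst y') \<and> h' (h a) = a"
     "\<forall>b\<in>Field (fst y'). h' b \<in> Field (fst y) \<and> h (h' b) = b"
    using h unfolding wmap_def bij_betw_iff_bijections by blast
  define f where "f n = (if even n then 2 * g (n div 2) else Suc (2 * h (n div 2)))" for n
  define f' where "f' n = (if even n then 2 * g' (n div 2) else Suc (2 * h' (n div 2)))" for n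
  have fe[simp]: "f (2*i) = 2 * g i" "f (Suc (2*i)) = Suc (2 * h i)" for i by (simp_all add: f_def)
  have fe'[simp]: "f' (2*i) = 2 * g' i" "f' (Suc (2*i)) = Suc (2 * h' i)" for i by (simp_all add: f'_def)
  have "wmap (wconcat x y) (wconcat x' y') f" unfolding wmap_def
  proof (intro conjI ballI)
    show "bij_betw f (Field (fst (wconcat x y))) (Field (fst (wconcat x' y')))"
    proof (rule bij_betw_byWitness[where f'=f'])
      show "\<forall>a\<in>Field (fst (wconcat x y)). f' (f a) = a"
        by (auto elim!: wcF_cases simp: g' h')
      show "\<forall>a'\<in>Field (fst (wconcat x' y')). f (f' a') = a'"
        by (auto elim!: wcF_cases simp: g' h')
      show "f ` Field (fst (wconcat x y)) \<subseteq> Field (fst (wconcat x' y'))"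
        by (auto elim!: wcF_cases simp: g' h')
      show "f' ` Field (fst (wconcat x' y')) \<subseteq> Field (fst (wconcat x y))"
        by (auto elim!: wcF_cases simp: g' h')
    qed
  next
    fix a b assume "a \<in> Field (fst (wconcat x y))" "b \<in> Field (fst (wconcat x y))"
    thus "((a, b) \<in> fst (wconcat x y)) = ((f a, f b) \<in> fst (wconcat x' y'))"
      using g h g' h' unfolding wmap_def by (auto elim!: wcF_cases)
  next
    fix a assume "a \<in> Field (fst (wconcat x y))"
    thus "snd (wconcat x' y') (f a) = snd (wconcat x y) a"
      using g h unfolding wmap_def by (auto elim!: wcF_cases)
  qed
  thus ?thesis using word_eq_iff by blast
qed

lemma split_word:
  assumes w: "is_word x" and d: "dc (fst x) S"
  shows "word_eq x (wconcat (sub x S) (sub x (Field (fst x) - S)))"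
proof -
  have X: "Well_order (fst x)" using w is_word_def by blast
  have SF: "S \<subseteq> Field (fst x)" using d dc_def by blast
  define f where "f i = (if i \<in> S then 2*i else Suc (2*i))" for i
  have FS: "Field (fst (sub x S)) = S" "Field (fst (sub x (Field (fst x) - S))) = Field (fst x) - S"
    using Field_sub[OF w] SF by auto
  show ?thesis
  proof (rule weq_full[where f=f])
    show "is_word x" by (rule w)
    show "is_word (wconcat (sub x S) (sub x (Field (fst x) - S)))"
      using word_wc word_sub w by blast
    show "bij_betw f (Field (fst x)) (Field (fst (wconcat (sub x S) (sub x (Field (fst x) - S)))))"
    proof (rule bij_betw_byWitness[where f'="\<lambda>n. n div 2"])
      show "\<forall>a\<in>Field (fst x). f a div 2 = a" by (simp add: f_def)
      show "\<forall>a'\<in>Field (fst (wconcat (sub x S) (sub x (Field (fst x) - S)))). f (a' div 2) = a'"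
        using FS by (auto elim!: wcF_cases simp: f_def)
      show "f ` Field (fst x) \<subseteq> Field (fst (wconcat (sub x S) (sub x (Field (fst x) - S))))"
        using FS by (auto simp: f_def)
      show "(\<lambda>n. n div 2) ` Field (fst (wconcat (sub x S) (sub x (Field (fst x) - S)))) \<subseteq> Field (fst x)"
        using FS SF by (auto elim!: wcF_cases)
    qed
    fix a b assume a: "a \<in> Field (fst x)" and b: "b \<in> Field (fst x)"
    show "((a, b) \<in> fst x) = ((f a, f b) \<in> fst (wconcat (sub x S) (sub x (Field (fst x) - S))))"
    proof (cases "a \<in> S"; cases "b \<in> S")
      assume "a \<in> S" "b \<notin> S"
      moreover have "(a,b) \<in> fst x"
        using WO_total[OF X a b] d \<open>b \<notin> S\<close> \<open>a \<in> S\<close> unfolding dc_def by blast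
      ultimately show ?thesis using FS a b by (simp add: f_def)
    next
      assume "a \<notin> S" "b \<in> S"
      moreover have "(a,b) \<notin> fst x" using d \<open>a \<notin> S\<close> \<open>b \<in> S\<close> unfolding dc_def by blast
      ultimately show ?thesis by (simp add: f_def)
    qed (use a b in \<open>auto simp: f_def fst_sub\<close>)
  next
    fix a assume "a \<in> Field (fst x)"
    show "snd (wconcat (sub x S) (sub x (Field (fst x) - S))) (f a) = snd x a"
      by (simp add: f_def)
  qed
qed




definition emp :: "'a tword" where "emp = ({}, \<lambda>_. undefined)"

lemma word_emp: "is_word emp"
  unfolding is_word_def emp_def by (rule WO_intro) (auto simp: Field_def)

lemma empty_emp: "empty_word emp"
  by (simp add: empty_word_def emp_def)

lemma weq_empty: "word_eq x y \<Longrightarrow> empty_word x \<longleftrightarrow> empty_word y"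
  unfolding word_eq_iff wmap_def empty_word_def bij_betw_def by auto

lemma empty_wc: "empty_word (wconcat x y) \<longleftrightarrow> empty_word x \<and> empty_word y"
  unfolding empty_word_def
proof (intro iffI conjI)
  assume A: "Field (fst (wconcat x y)) = {}"
  show "Field (fst x) = {}"
  proof (rule ccontr)
    assume "Field (fst x) \<noteq> {}" then obtain i where "i \<in> Field (fst x)" by blast
    hence "2*i \<in> Field (fst (wconcat x y))" by simp
    thus False using A by blast
  qed
  show "Field (fst y) = {}"
  proof (rule ccontr)
    assume "Field (fst y) \<noteq> {}" then obtain i where "i \<in> Field (fst y)" by blast
    hence "Suc (2*i) \<in> Field (fst (wconcat x y))" by simp
    thus False using A by blast
  qed
next
  assume "Field (fst x) = {} \<and> Field (fst y) = {}"
  thus "Field (fst (wconcat x y)) = {}" by (auto elim!: wcF_cases)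
qed

lemma empty_weq: "empty_word x \<Longrightarrow> empty_word y \<Longrightarrow> word_eq x y"
  unfolding word_eq_iff wmap_def empty_word_def by (auto intro!: exI[of _ id])

lemma left_unit: assumes "empty_word e" shows "word_eq (wconcat e y) y"
proof -
  have E: "Field (fst e) = {}" using assms empty_word_def by blast
  have "wmap (wconcat e y) y (\<lambda>n. n div 2)" unfolding wmap_def
  proof (intro conjI ballI)
    show "bij_betw (\<lambda>n. n div 2) (Field (fst (wconcat e y))) (Field (fst y))"
      by (rule bij_betw_byWitness[where f'="\<lambda>n. Suc (2*n)"]) (auto elim!: wcF_cases simp: E)
  qed (auto elim!: wcF_cases simp: E)
  thus ?thesis using word_eq_iff by blast
qed

lemma right_unit: assumes "empty_word e" shows "word_eq (wconcat x e) x"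
proof -
  have E: "Field (fst e) = {}" using assms empty_word_def by blast
  have "wmap (wconcat x e) x (\<lambda>n. n div 2)" unfolding wmap_def
  proof (intro conjI ballI)
    show "bij_betw (\<lambda>n. n div 2) (Field (fst (wconcat x e))) (Field (fst x))"
      by (rule bij_betw_byWitness[where f'="\<lambda>n. 2*n"]) (auto elim!: wcF_cases simp: E)
  qed (auto elim!: wcF_cases simp: E)
  thus ?thesis using word_eq_iff by blast
qed

lemma letter_Field[simp]: "Field (fst (letter a)) = {0}"
  by (simp add: letter_def Field_def)

lemma word_letter: "is_word (letter a)"
  unfolding is_word_def letter_def by (rule WO_intro) (auto simp: Field_def)

lemma dc_ofilter: "dc r S \<Longrightarrow> ofilter r S"
  unfolding dc_def ofilter_def under_def by blast

definition starts :: "'a tword \<Rightarrow> 'a \<Rightarrow> bool" where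
  "starts x a \<longleftrightarrow> (\<exists>r. is_word r \<and> word_eq x (wconcat (letter a) r))"

lemma head:
  assumes w: "is_word x" and ne: "\<not> empty_word x"
  shows "\<exists>a. starts x a"
proof -
  have X: "Well_order (fst x)" using w is_word_def by blast
  obtain m where m: "m \<in> Field (fst x)" "\<forall>a'\<in>Field (fst x). (m,a') \<in> fst x"
    using WO_least[OF X, of "Field (fst x)"] ne empty_word_def by blast
  have d: "dc (fst x) {m}" unfolding dc_def
    using m WO_antisym[OF X] by (auto intro: FieldI1)
  have 1: "word_eq x (wconcat (sub x {m}) (sub x (Field (fst x) - {m})))"
    by (rule split_word[OF w d])
  have 2: "word_eq (sub x {m}) (letter (snd x m))"
  proof (rule weq_full[where f="\<lambda>_. 0"])
    show "is_word (sub x {m})" using word_sub w by blast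
    show "is_word (letter (snd x m))" by (rule word_letter)
    have F: "Field (fst (sub x {m})) = {m}" using Field_sub[OF w] m by auto
    show "bij_betw (\<lambda>_. 0) (Field (fst (sub x {m}))) (Field (fst (letter (snd x m))))"
      unfolding F by (simp add: bij_betw_def)
    show "((a, b) \<in> fst (sub x {m})) = ((0, 0) \<in> fst (letter (snd x m)))"
      if "a \<in> Field (fst (sub x {m}))" "b \<in> Field (fst (sub x {m}))" for a b
      using that F m WO_refl[OF X m(1)] by (simp add: fst_sub letter_def)
    show "snd (letter (snd x m)) 0 = snd (sub x {m}) a" if "a \<in> Field (fst (sub x {m}))" for a
      using that F by (simp add: letter_def)
  qed
  have "word_eq x (wconcat (letter (snd x m)) (sub x (Field (fst x) - {m})))"
    using weq_trans[OF 1 weq_cong[OF 2 weq_refl]] word_sub[OF w] by blast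
  thus ?thesis unfolding starts_def using word_sub[OF w] by blast
qed

lemma letter_least:
  assumes "n \<in> Field (fst (wconcat (letter a) r))"
  shows "(0, n) \<in> fst (wconcat (letter a) r)"
  using assms unfolding wc_Field wc_mem by (auto simp: letter_def)

lemma letter_inj:
  assumes s: "is_word s" and e: "word_eq (wconcat (letter a) r) (wconcat (letter b) s)"
  shows "a = b"
proof -
  obtain f where f: "wmap (wconcat (letter a) r) (wconcat (letter b) s) f" using e word_eq_iff by blast
  let ?X = "wconcat (letter a) r" and ?Y = "wconcat (letter b) s"
  have bij: "bij_betw f (Field (fst ?X)) (Field (fst ?Y))"
    and ord: "\<And>x y. x \<in> Field (fst ?X) \<Longrightarrow> y \<in> Field (fst ?X) \<Longrightarrow> (x,y) \<in> fst ?X \<longleftrightarrow> (f x, f y) \<in> fst ?Y"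
    and lt: "\<And>x. x \<in> Field (fst ?X) \<Longrightarrow> snd ?Y (f x) = snd ?X x"
    using f unfolding wmap_def by auto
  have Y: "Well_order (fst ?Y)" using word_wc[OF word_letter s] unfolding is_word_def .
  have z: "(0::nat) \<in> Field (fst ?X)" "(0::nat) \<in> Field (fst ?Y)"
    unfolding wc_Field by (auto simp: letter_def Field_def)
  have f0: "f 0 \<in> Field (fst ?Y)" using bij z unfolding bij_betw_def by blast
  have all: "(f 0, n) \<in> fst ?Y" if "n \<in> Field (fst ?Y)" for n
  proof -
    have "n \<in> f ` Field (fst ?X)" using bij that unfolding bij_betw_def by simp
    then obtain m where m: "m \<in> Field (fst ?X)" "n = f m" by (rule imageE) simp
    have "(0, m) \<in> fst ?X" by (rule letter_least[OF m(1)])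
    thus ?thesis using ord[OF z(1) m(1)] m(2) by simp
  qed
  have "f 0 = 0" using WO_antisym[OF Y all[OF z(2)] letter_least[OF f0]] .
  hence "snd ?Y 0 = snd ?X 0" using lt[OF z(1)] by simp
  thus ?thesis by (simp add: letter_def wconcat_def)
qed

lemma starts_unique:
  assumes "starts x a" "starts x b" shows "a = b"
proof -
  obtain r where r: "is_word r" "word_eq x (wconcat (letter a) r)"
    using assms(1) unfolding starts_def by blast
  obtain s where s: "is_word s" "word_eq x (wconcat (letter b) s)"
    using assms(2) unfolding starts_def by blast
  have "word_eq (wconcat (letter a) r) (wconcat (letter b) s)"
    by (rule weq_trans[OF weq_sym[OF r(2)] s(2)])
  thus ?thesis using letter_inj[OF s(1)] by blast
qed

lemma starts_weq: assumes "starts x a" "word_eq y x" shows "starts y a"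
proof -
  obtain r where r: "is_word r" "word_eq x (wconcat (letter a) r)"
    using assms(1) unfolding starts_def by blast
  show ?thesis unfolding starts_def using r(1) weq_trans[OF assms(2) r(2)] by blast
qed

lemma starts_letter: assumes "is_word r" shows "starts (wconcat (letter a) r) a"
  unfolding starts_def using assms weq_refl[OF word_wc[OF word_letter assms]] by blast

lemma WOw: "is_word x \<Longrightarrow> Well_order (fst x)"
  by (simp add: is_word_def)

lemma ext_empty:
  assumes a: "is_word a" and e: "is_word e" and eq: "word_eq a (wconcat a e)"
  shows "empty_word e"
proof (rule ccontr)
  assume ne: "\<not> empty_word e"
  let ?W = "wconcat a e"
  have w: "is_word ?W" using word_wc[OF a e] .
  have W: "Well_order (fst ?W)" using WOw[OF w] .
  define S where "S = {n \<in> Field (fst ?W). even n}"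
  have "word_eq (sub ?W S) (sub a (Field (fst a)))"
  proof (rule weq_sub[where f="\<lambda>n. n div 2"])
    show "bij_betw (\<lambda>n. n div 2) S (Field (fst a))"
      by (rule bij_betw_byWitness[where f'="\<lambda>n. 2*n"]) (auto simp: S_def elim!: wcF_cases)
  qed (auto simp: S_def a w elim!: wcF_cases)
  hence "word_eq (sub ?W S) ?W" using weq_trans[OF _ eq] by simp
  hence "(Restr (fst ?W) S, fst ?W) \<in> ordIso"
    unfolding ordIso_def word_eq_def using W Well_order_Restr[OF W] by (auto simp: fst_sub)
  moreover have "ofilter (fst ?W) S"
    unfolding ofilter_def under_def S_def by (auto elim!: wcF_cases intro: FieldI1 simp: wc_mem wc_Field)
  moreover have "S < Field (fst ?W)"
  proof -
    obtain j where "j \<in> Field (fst e)" using ne unfolding empty_word_def by blast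
    hence "Suc (2*j) \<in> Field (fst ?W)" "Suc (2*j) \<notin> S" by (auto simp: S_def)
    thus ?thesis unfolding S_def by blast
  qed
  ultimately show False using ofilter_ordLess[OF W] not_ordLess_ordIso by blast
qed




definition ev :: "nat \<Rightarrow> nat" where "ev i = 2*i"
definition od :: "nat \<Rightarrow> nat" where "od i = Suc (2*i)"

lemma ev_od_simps[simp]: "ev i = ev j \<longleftrightarrow> i = j" "od i = od j \<longleftrightarrow> i = j" "ev i \<noteq> od j" "od j \<noteq> ev i"
  "ev i div 2 = i" "od i div 2 = i" "even (ev i)" "\<not> even (od i)"
  by (auto simp: ev_def od_def) presburger+

lemma w_ee[simp]: "(ev i, ev j) \<in> fst (wconcat x y) \<longleftrightarrow> (i,j) \<in> fst x"
  by (simp add: ev_def)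
lemma w_oo[simp]: "(od i, od j) \<in> fst (wconcat x y) \<longleftrightarrow> (i,j) \<in> fst y"
  by (simp add: od_def)
lemma w_eo[simp]: "(ev i, od j) \<in> fst (wconcat x y) \<longleftrightarrow> i \<in> Field (fst x) \<and> j \<in> Field (fst y)"
  by (simp add: ev_def od_def)
lemma w_oe[simp]: "(od i, ev j) \<notin> fst (wconcat x y)"
  by (simp add: ev_def od_def)
lemma wF_e[simp]: "ev i \<in> Field (fst (wconcat x y)) \<longleftrightarrow> i \<in> Field (fst x)"
  by (simp add: ev_def)
lemma wF_o[simp]: "od i \<in> Field (fst (wconcat x y)) \<longleftrightarrow> i \<in> Field (fst y)"
  by (simp add: od_def)
lemma ws_e[simp]: "snd (wconcat x y) (ev i) = snd x i"
  by (simp add: ev_def)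
lemma ws_o[simp]: "snd (wconcat x y) (od i) = snd y i"
  by (simp add: od_def)

lemma wF_cases:
  assumes "n \<in> Field (fst (wconcat x y))"
  obtains i where "n = ev i" "i \<in> Field (fst x)" | j where "n = od j" "j \<in> Field (fst y)"
  using assms by (auto elim!: wcF_cases simp: ev_def od_def)

lemma wmap_inv:
  assumes g: "wmap x y g"
  obtains g' where "wmap y x g'" "\<And>n. n \<in> Field (fst y) \<Longrightarrow> g (g' n) = n \<and> g' n \<in> Field (fst x)"
    "\<And>n. n \<in> Field (fst x) \<Longrightarrow> g' (g n) = n \<and> g n \<in> Field (fst y)"
proof -
  let ?h = "inv_into (Field (fst x)) g"
  have b: "bij_betw ?h (Field (fst y)) (Field (fst x))"
    using g unfolding wmap_def by (simp add: bij_betw_inv_into)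
  have gg: "\<And>a. a \<in> Field (fst y) \<Longrightarrow> g (?h a) = a \<and> ?h a \<in> Field (fst x)"
    using g unfolding wmap_def bij_betw_def by (auto simp: f_inv_into_f inv_into_into)
  have hh: "\<And>a. a \<in> Field (fst x) \<Longrightarrow> ?h (g a) = a \<and> g a \<in> Field (fst y)"
    using g unfolding wmap_def bij_betw_def by auto
  have "wmap y x ?h" unfolding wmap_def
  proof (intro conjI ballI)
    show "bij_betw ?h (Field (fst y)) (Field (fst x))" by (rule b)
  next
    fix a b assume "a \<in> Field (fst y)" "b \<in> Field (fst y)"
    thus "((a, b) \<in> fst y) = ((?h a, ?h b) \<in> fst x)" using gg g unfolding wmap_def by metis
  next
    fix a assume "a \<in> Field (fst y)"
    thus "snd x (?h a) = snd y a" using gg g unfolding wmap_def by metis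
  qed
  thus ?thesis using that gg hh by blast
qed

lemma assoc: "word_eq (wconcat (wconcat x y) z) (wconcat x (wconcat y z))"
proof -
  define f where "f n = (if even n then (if even (n div 2) then ev (n div 2 div 2)
      else od (ev (n div 2 div 2))) else od (od (n div 2)))" for n :: nat
  define f' where "f' m = (if even m then ev (ev (m div 2)) else (if even (m div 2)
      then ev (od (m div 2 div 2)) else od (m div 2 div 2)))" for m :: nat
  have fs[simp]: "f (ev (ev i)) = ev i" "f (ev (od i)) = od (ev i)" "f (od i) = od (od i)" for i
    by (simp_all add: f_def)
  have fs'[simp]: "f' (ev i) = ev (ev i)" "f' (od (ev i)) = ev (od i)" "f' (od (od i)) = od i" for i
    by (simp_all add: f'_def)
  have "wmap (wconcat (wconcat x y) z) (wconcat x (wconcat y z)) f" unfolding wmap_def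
  proof (intro conjI ballI)
    show "bij_betw f (Field (fst (wconcat (wconcat x y) z))) (Field (fst (wconcat x (wconcat y z))))"
      by (rule bij_betw_byWitness[where f'=f']) (auto elim!: wF_cases)
  next
    fix a b assume "a \<in> Field (fst (wconcat (wconcat x y) z))" "b \<in> Field (fst (wconcat (wconcat x y) z))"
    thus "((a, b) \<in> fst (wconcat (wconcat x y) z)) = ((f a, f b) \<in> fst (wconcat x (wconcat y z)))"
      by (auto elim!: wF_cases)
  qed (auto elim!: wF_cases)
  thus ?thesis using word_eq_iff by blast
qed

lemma wmapD:
  assumes "wmap x y g"
  shows "bij_betw g (Field (fst x)) (Field (fst y))"
    "\<And>a b. a \<in> Field (fst x) \<Longrightarrow> b \<in> Field (fst x) \<Longrightarrow> (a,b) \<in> fst x \<longleftrightarrow> (g a, g b) \<in> fst y"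
    "\<And>a. a \<in> Field (fst x) \<Longrightarrow> snd y (g a) = snd x a"
    "inj_on g (Field (fst x))" "\<And>a. a \<in> Field (fst x) \<Longrightarrow> g a \<in> Field (fst y)"
    "g ` Field (fst x) = Field (fst y)"
  using assms unfolding wmap_def bij_betw_def by auto


lemma levi_half:
  assumes a: "is_word a" and b: "is_word b" and c: "is_word c" and d: "is_word d"
    and g: "wmap (wconcat a b) (wconcat c d) g"
    and AC: "\<forall>i\<in>Field (fst a). even (g (ev i))"
  shows "\<exists>e. is_word e \<and> word_eq c (wconcat a e) \<and> word_eq b (wconcat e d)"
proof -
  let ?W1 = "wconcat a b" and ?W2 = "wconcat c d"
  have w1: "is_word ?W1" and w2: "is_word ?W2" using word_wc a b c d by blast+
  note gD = wmapD[OF g]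
  define E where "E = {j \<in> Field (fst b). even (g (od j))}"
  define e where "e = sub b E"
  have we: "is_word e" using word_sub[OF b] e_def by simp
  have FE: "Field (fst e) = E" using Field_sub[OF b] e_def E_def by auto
  have FE': "Field (Restr (fst b) E) = E" using FE e_def fst_sub by metis
  have EB: "E \<subseteq> Field (fst b)" using E_def by blast
  define T where "T = ev ` Field (fst a) \<union> od ` E"
  define Ev where "Ev = {m \<in> Field (fst ?W2). even m}"
  define Od where "Od = {m \<in> Field (fst ?W2). \<not> even m}"
  have TF: "T \<subseteq> Field (fst ?W1)" unfolding T_def E_def by auto
  have gT: "g ` T = Ev"
  proof
    show "g ` T \<subseteq> Ev" unfolding T_def Ev_def E_def using AC gD(5) by auto
    show "Ev \<subseteq> g ` T"
    proof
      fix m assume m: "m \<in> Ev"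
      then obtain n where n: "n \<in> Field (fst ?W1)" "m = g n" using gD(6) unfolding Ev_def by blast
      show "m \<in> g ` T" using n
      proof (cases rule: wF_cases)
        case (1 i) thus ?thesis using n unfolding T_def by auto
      next
        case (2 j) thus ?thesis using n m unfolding T_def Ev_def E_def by auto
      qed
    qed
  qed
  have c1: "word_eq (sub c (Field (fst c))) (sub ?W2 Ev)"
  proof (rule weq_sub[OF c w2 order_refl])
    show "Ev \<subseteq> Field (fst ?W2)" unfolding Ev_def by blast
    show "bij_betw ev (Field (fst c)) Ev"
      by (rule bij_betw_byWitness[where f'="\<lambda>m. m div 2"]) (auto simp: Ev_def elim!: wF_cases)
  qed auto
  have c2: "word_eq (sub ?W1 T) (sub ?W2 (g ` T))"
  proof (rule weq_sub[OF w1 w2 TF])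
    show "g ` T \<subseteq> Field (fst ?W2)" using TF gD(5) by blast
    show "bij_betw g T (g ` T)" using inj_on_subset[OF gD(4) TF] by (simp add: bij_betw_def)
    fix n m assume "n \<in> T" "m \<in> T"
    thus "((n, m) \<in> fst ?W1) = ((g n, g m) \<in> fst ?W2)" using gD(2) TF by blast
  next
    fix n assume "n \<in> T"
    thus "snd ?W2 (g n) = snd ?W1 n" using gD(3) TF by blast
  qed
  have c3: "word_eq (sub ?W1 T) (sub (wconcat a e) (Field (fst (wconcat a e))))"
  proof (rule weq_sub[OF w1 word_wc[OF a we] TF order_refl])
    show "bij_betw id T (Field (fst (wconcat a e)))"
    proof -
      have "T = Field (fst (wconcat a e))"
        unfolding T_def FE[symmetric] by (auto elim!: wF_cases)
      thus ?thesis by simp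
    qed
    fix n m assume "n \<in> T" "m \<in> T"
    thus "((n, m) \<in> fst ?W1) = ((id n, id m) \<in> fst (wconcat a e))"
      unfolding T_def using EB by (auto simp: FE' e_def fst_sub)
  next
    fix n assume "n \<in> T"
    thus "snd (wconcat a e) (id n) = snd ?W1 n" unfolding T_def by (auto simp: e_def)
  qed
  have part1: "word_eq c (wconcat a e)"
    using weq_trans[OF c1[unfolded gT[symmetric]] weq_trans[OF weq_sym[OF c2] c3]] by simp
  have dcE: "dc (fst b) E" unfolding dc_def
  proof (intro conjI allI impI)
    show "E \<subseteq> Field (fst b)" unfolding E_def by blast
    fix j' j assume jj: "(j', j) \<in> fst b" "j \<in> E"
    have j'F: "j' \<in> Field (fst b)" "j \<in> Field (fst b)" using jj by (auto intro: FieldI1 FieldI2)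
    have "(g (od j'), g (od j)) \<in> fst ?W2" using gD(2)[of "od j'" "od j"] jj j'F by simp
    moreover have "even (g (od j))" using jj E_def by blast
    moreover have "g (od j') \<in> Field (fst ?W2)" "g (od j) \<in> Field (fst ?W2)" using gD(5) j'F by simp_all
    ultimately have "even (g (od j'))" by (auto elim!: wF_cases)
    thus "j' \<in> E" using j'F E_def by blast
  qed
  have sp: "word_eq b (wconcat e (sub b (Field (fst b) - E)))"
    using split_word[OF b dcE] e_def by simp
  have d1: "word_eq (sub b (Field (fst b) - E)) (sub ?W2 Od)"
  proof (rule weq_sub[OF b w2])
    show "Field (fst b) - E \<subseteq> Field (fst b)" by blast
    show "Od \<subseteq> Field (fst ?W2)" unfolding Od_def by blast
    show "bij_betw (\<lambda>j. g (od j)) (Field (fst b) - E) Od" unfolding bij_betw_def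
    proof
      show "inj_on (\<lambda>j. g (od j)) (Field (fst b) - E)"
        unfolding inj_on_def
      proof (intro ballI impI)
        fix x y assume "x \<in> Field (fst b) - E" "y \<in> Field (fst b) - E" "g (od x) = g (od y)"
        thus "x = y" using gD(4)[unfolded inj_on_def, rule_format, of "od x" "od y"] by simp
      qed
      show "(\<lambda>j. g (od j)) ` (Field (fst b) - E) = Od"
      proof
        show "(\<lambda>j. g (od j)) ` (Field (fst b) - E) \<subseteq> Od"
          unfolding Od_def E_def using gD(5) by auto
        show "Od \<subseteq> (\<lambda>j. g (od j)) ` (Field (fst b) - E)"
        proof
          fix m assume m: "m \<in> Od"
          then obtain n where n: "n \<in> Field (fst ?W1)" "m = g n" using gD(6) unfolding Od_def by blast
          show "m \<in> (\<lambda>j. g (od j)) ` (Field (fst b) - E)" using n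
          proof (cases rule: wF_cases)
            case (1 i) thus ?thesis using n m AC unfolding Od_def by auto
          next
            case (2 j) thus ?thesis using n m unfolding Od_def E_def by auto
          qed
        qed
      qed
    qed
    fix j j' assume "j \<in> Field (fst b) - E" "j' \<in> Field (fst b) - E"
    thus "((j, j') \<in> fst b) = ((g (od j), g (od j')) \<in> fst ?W2)"
      using gD(2)[of "od j" "od j'"] by simp
  next
    fix j assume "j \<in> Field (fst b) - E"
    thus "snd ?W2 (g (od j)) = snd b j" using gD(3)[of "od j"] by simp
  qed
  have d2: "word_eq (sub d (Field (fst d))) (sub ?W2 Od)"
  proof (rule weq_sub[OF d w2 order_refl])
    show "Od \<subseteq> Field (fst ?W2)" unfolding Od_def by blast
    show "bij_betw od (Field (fst d)) Od"
      by (rule bij_betw_byWitness[where f'="\<lambda>m. m div 2"]) (auto simp: Od_def elim!: wF_cases)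
  qed auto
  have "word_eq (sub b (Field (fst b) - E)) d" using weq_trans[OF d1 weq_sym[OF d2]] by simp
  hence part2: "word_eq b (wconcat e d)"
    using weq_trans[OF sp weq_cong[OF weq_refl[OF we]]] by blast
  show ?thesis using we part1 part2 by blast
qed

lemma levi:
  assumes a: "is_word a" and b: "is_word b" and c: "is_word c" and d: "is_word d"
    and eq: "word_eq (wconcat a b) (wconcat c d)"
  shows "(\<exists>e. is_word e \<and> word_eq c (wconcat a e) \<and> word_eq b (wconcat e d)) \<or>
         (\<exists>e. is_word e \<and> word_eq a (wconcat c e) \<and> word_eq d (wconcat e b))"
proof -
  obtain g where g: "wmap (wconcat a b) (wconcat c d) g" using eq word_eq_iff by blast
  obtain g' where g': "wmap (wconcat c d) (wconcat a b) g'"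
    and gg': "\<And>n. n \<in> Field (fst (wconcat c d)) \<Longrightarrow> g (g' n) = n \<and> g' n \<in> Field (fst (wconcat a b))"
    by (rule wmap_inv[OF g]) blast
  note gD = wmapD[OF g]
  show ?thesis
  proof (cases "\<forall>i\<in>Field (fst a). even (g (ev i))")
    case True
    thus ?thesis using levi_half[OF a b c d g] by blast
  next
    case False
    then obtain i0 where i0: "i0 \<in> Field (fst a)" "\<not> even (g (ev i0))" by blast
    have "\<forall>i\<in>Field (fst c). even (g' (ev i))"
    proof (rule ballI, rule ccontr)
      fix i assume i: "i \<in> Field (fst c)" and od: "\<not> even (g' (ev i))"
      have iF: "ev i \<in> Field (fst (wconcat c d))" using i by simp
      have "g' (ev i) \<in> Field (fst (wconcat a b))" using gg'[OF iF] by blast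
      then obtain j where j: "g' (ev i) = od j" "j \<in> Field (fst b)" using od by (auto elim!: wF_cases)
      have "(ev i0, od j) \<in> fst (wconcat a b)" using i0 j by simp
      hence "(g (ev i0), g (od j)) \<in> fst (wconcat c d)" using gD(2)[of "ev i0" "od j"] i0 j by simp
      moreover have "g (od j) = ev i" using gg'[OF iF] j by simp
      moreover have "g (ev i0) \<in> Field (fst (wconcat c d))" using gD(5) i0 by simp
      ultimately show False using i0(2) by (auto elim!: wF_cases)
    qed
    thus ?thesis using levi_half[OF c d a b g'] by blast
  qed
qed

lemma levi':
  assumes a: "is_word a" and b: "is_word b" and c: "is_word c" and d: "is_word d"
    and eq: "word_eq (wconcat a b) (wconcat c d)"
  shows "(\<exists>e. is_word e \<and> word_eq c (wconcat a e) \<and> word_eq b (wconcat e d)) \<or>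
         (\<exists>e. is_word e \<and> \<not> empty_word e \<and> word_eq a (wconcat c e) \<and> word_eq d (wconcat e b))"
proof -
  { fix e assume e: "is_word e" "empty_word e" "word_eq a (wconcat c e)" "word_eq d (wconcat e b)"
    have ca: "word_eq c a" using weq_sym[OF weq_trans[OF e(3) right_unit[OF e(2)]]] .
    have db: "word_eq d b" using weq_trans[OF e(4) left_unit[OF e(2)]] .
    have "word_eq c (wconcat a emp)" using weq_trans[OF ca weq_sym[OF right_unit[OF empty_emp]]] .
    moreover have "word_eq b (wconcat emp d)" using weq_trans[OF weq_sym[OF db] weq_sym[OF left_unit[OF empty_emp]]] .
    ultimately have "\<exists>e. is_word e \<and> word_eq c (wconcat a e) \<and> word_eq b (wconcat e d)"
      using word_emp by blast }
  thus ?thesis using levi[OF a b c d eq] by blast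
qed

lemma cancel:
  assumes a: "is_word a" and b: "is_word b" and c: "is_word c"
    and eq: "word_eq (wconcat a b) (wconcat a c)"
  shows "word_eq b c"
  using levi[OF a b a c eq]
proof
  assume "\<exists>e. is_word e \<and> word_eq a (wconcat a e) \<and> word_eq b (wconcat e c)"
  then obtain e where e: "is_word e" "word_eq a (wconcat a e)" "word_eq b (wconcat e c)" by blast
  have "empty_word e" using ext_empty[OF a e(1) e(2)] .
  thus ?thesis using weq_trans[OF e(3) left_unit] by blast
next
  assume "\<exists>e. is_word e \<and> word_eq a (wconcat a e) \<and> word_eq c (wconcat e b)"
  then obtain e where e: "is_word e" "word_eq a (wconcat a e)" "word_eq c (wconcat e b)" by blast
  have "empty_word e" using ext_empty[OF a e(1) e(2)] .
  thus ?thesis using weq_sym[OF weq_trans[OF e(3) left_unit]] by blast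
qed




lemma assocR: "word_eq x (wconcat (wconcat p q) r) \<Longrightarrow> word_eq x (wconcat p (wconcat q r))"
  by (rule weq_trans[OF _ assoc])
lemma assocL: "word_eq x (wconcat p (wconcat q r)) \<Longrightarrow> word_eq x (wconcat (wconcat p q) r)"
  by (rule weq_trans[OF _ weq_sym[OF assoc]])
lemma congL: "word_eq x (wconcat p q) \<Longrightarrow> word_eq p p' \<Longrightarrow> is_word q \<Longrightarrow> word_eq x (wconcat p' q)"
  by (rule weq_trans[OF _ weq_cong[OF _ weq_refl]])
lemma congR: "word_eq x (wconcat p q) \<Longrightarrow> word_eq q q' \<Longrightarrow> is_word p \<Longrightarrow> word_eq x (wconcat p q')"
  by (rule weq_trans[OF _ weq_cong[OF weq_refl]])


definition pe :: "nat \<Rightarrow> nat \<Rightarrow> nat" where "pe k p = prod_encode (k, p)"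

lemma pe_inj[simp]: "pe k p = pe k' p' \<longleftrightarrow> k = k' \<and> p = p'"
  unfolding pe_def by (metis prod_encode_eq prod.inject)

lemma pe_surj: "\<exists>k p. n = pe k p"
  unfolding pe_def by (metis prod_decode_inverse surj_pair)

lemma wp_mem: "(n, n') \<in> fst (wpow x \<alpha>) \<longleftrightarrow> (\<exists>k p k' p'. n = pe k p \<and> n' = pe k' p' \<and>
         k \<in> Field \<alpha> \<and> k' \<in> Field \<alpha> \<and> p \<in> Field (fst x) \<and> p' \<in> Field (fst x) \<and>
         ((k \<noteq> k' \<and> (k,k') \<in> \<alpha>) \<or> (k = k' \<and> (p,p') \<in> fst x)))"
  unfolding wpow_def pe_def by auto

lemma wp_mem_pe[simp]: "(pe k p, pe k' p') \<in> fst (wpow x \<alpha>) \<longleftrightarrow>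
         k \<in> Field \<alpha> \<and> k' \<in> Field \<alpha> \<and> p \<in> Field (fst x) \<and> p' \<in> Field (fst x) \<and>
         ((k \<noteq> k' \<and> (k,k') \<in> \<alpha>) \<or> (k = k' \<and> (p,p') \<in> fst x))"
  unfolding wp_mem by simp

lemma wp_snd[simp]: "snd (wpow x \<alpha>) (pe k p) = snd x p"
  unfolding wpow_def pe_def by simp

lemma wpF_cases:
  assumes "n \<in> Field (fst (wpow x \<alpha>))"
  obtains k p where "n = pe k p" "k \<in> Field \<alpha>" "p \<in> Field (fst x)"
proof -
  obtain m where "(n,m) \<in> fst (wpow x \<alpha>) \<or> (m,n) \<in> fst (wpow x \<alpha>)"
    using assms by (auto simp: Field_def Domain_iff Range_iff)
  thus ?thesis using that unfolding wp_mem by blast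
qed

lemma wpF_pe[simp]:
  assumes "is_word x"
  shows "pe k p \<in> Field (fst (wpow x \<alpha>)) \<longleftrightarrow> k \<in> Field \<alpha> \<and> p \<in> Field (fst x)"
proof
  assume "pe k p \<in> Field (fst (wpow x \<alpha>))"
  thus "k \<in> Field \<alpha> \<and> p \<in> Field (fst x)" by (auto elim!: wpF_cases)
next
  assume "k \<in> Field \<alpha> \<and> p \<in> Field (fst x)"
  hence "(pe k p, pe k p) \<in> fst (wpow x \<alpha>)" using WO_refl[OF WOw[OF assms]] by simp
  thus "pe k p \<in> Field (fst (wpow x \<alpha>))" by (rule FieldI1)
qed

lemma word_pow: assumes u: "is_word u" and a: "Well_order \<alpha>" shows "is_word (wpow u \<alpha>)"
  unfolding is_word_def
proof (rule WO_intro)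
  have U: "Well_order (fst u)" using WOw[OF u] .
  show "(n1, n3) \<in> fst (wpow u \<alpha>)" if hh: "(n1, n2) \<in> fst (wpow u \<alpha>)" "(n2, n3) \<in> fst (wpow u \<alpha>)" for n1 n2 n3
  proof -
    obtain k1 p1 k2 p2 where A: "n1 = pe k1 p1" "n2 = pe k2 p2" "k1 \<in> Field \<alpha>" "k2 \<in> Field \<alpha>"
      "p1 \<in> Field (fst u)" "p2 \<in> Field (fst u)" "(k1 \<noteq> k2 \<and> (k1,k2) \<in> \<alpha>) \<or> (k1 = k2 \<and> (p1,p2) \<in> fst u)"
      using hh(1) unfolding wp_mem by blast
    obtain k3 p3 where B: "n3 = pe k3 p3" "k3 \<in> Field \<alpha>" "p3 \<in> Field (fst u)"
      "(k2 \<noteq> k3 \<and> (k2,k3) \<in> \<alpha>) \<or> (k2 = k3 \<and> (p2,p3) \<in> fst u)"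
      using hh(2) A(2) unfolding wp_mem by auto
    have "(k1 \<noteq> k3 \<and> (k1,k3) \<in> \<alpha>) \<or> (k1 = k3 \<and> (p1,p3) \<in> fst u)"
      using A(7) B(4) WO_trans[OF a] WO_trans[OF U] WO_antisym[OF a] by metis
    thus ?thesis using A B by simp
  qed
  show "n1 = n2" if hh: "(n1, n2) \<in> fst (wpow u \<alpha>)" "(n2, n1) \<in> fst (wpow u \<alpha>)" for n1 n2
  proof -
    obtain k1 p1 k2 p2 where A: "n1 = pe k1 p1" "n2 = pe k2 p2"
      "(k1 \<noteq> k2 \<and> (k1,k2) \<in> \<alpha>) \<or> (k1 = k2 \<and> (p1,p2) \<in> fst u)"
      using hh(1) unfolding wp_mem by blast
    have "(k2 \<noteq> k1 \<and> (k2,k1) \<in> \<alpha>) \<or> (k2 = k1 \<and> (p2,p1) \<in> fst u)"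
      using hh(2) A unfolding wp_mem_pe by simp
    thus ?thesis using A WO_antisym[OF a] WO_antisym[OF U] by metis
  qed
  show "\<exists>n\<in>A. \<forall>n'\<in>A. (n, n') \<in> fst (wpow u \<alpha>)" if hh: "A \<subseteq> Field (fst (wpow u \<alpha>))" "A \<noteq> {}" for A
  proof -
    define K where "K = {k. \<exists>p. pe k p \<in> A}"
    have KF: "K \<subseteq> Field \<alpha>" using hh(1) unfolding K_def by (auto elim!: wpF_cases)
    have "K \<noteq> {}"
    proof -
      obtain n where "n \<in> A" using hh(2) by blast
      moreover obtain k p where "n = pe k p" using pe_surj by blast
      ultimately show ?thesis unfolding K_def by blast
    qed
    then obtain k0 where k0: "k0 \<in> K" "\<forall>k\<in>K. (k0,k) \<in> \<alpha>" using WO_least[OF a KF] by blast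
    define Pp where "Pp = {p. pe k0 p \<in> A}"
    have PF: "Pp \<subseteq> Field (fst u)" using hh(1) unfolding Pp_def by (auto elim!: wpF_cases)
    have "Pp \<noteq> {}" using k0(1) unfolding K_def Pp_def by blast
    then obtain p0 where p0: "p0 \<in> Pp" "\<forall>p\<in>Pp. (p0,p) \<in> fst u" using WO_least[OF U PF] by blast
    have "\<forall>n'\<in>A. (pe k0 p0, n') \<in> fst (wpow u \<alpha>)"
    proof
      fix n' assume n': "n' \<in> A"
      then obtain k p where kp: "n' = pe k p" "k \<in> Field \<alpha>" "p \<in> Field (fst u)"
        using hh(1) by (auto elim!: wpF_cases)
      have kK: "k \<in> K" using n' kp unfolding K_def by blast
      show "(pe k0 p0, n') \<in> fst (wpow u \<alpha>)"
      proof (cases "k = k0")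
        case True
        hence "p \<in> Pp" using n' kp unfolding Pp_def by simp
        thus ?thesis using kp True p0 PF KF k0 by auto
      next
        case False
        thus ?thesis using kp k0 kK KF PF p0 by auto
      qed
    qed
    moreover have "pe k0 p0 \<in> A" using p0 unfolding Pp_def by blast
    ultimately show ?thesis by blast
  qed
qed

lemma pow_empty: "Field \<alpha> = {} \<Longrightarrow> empty_word (wpow u \<alpha>)"
  unfolding empty_word_def by (auto elim!: wpF_cases)

lemma pow_nonempty: "is_word u \<Longrightarrow> Field \<alpha> \<noteq> {} \<Longrightarrow> \<not> empty_word u \<Longrightarrow> \<not> empty_word (wpow u \<alpha>)"
  unfolding empty_word_def using wpF_pe by blast

lemma sub_ev:
  assumes c: "is_word c" and e: "is_word e"
  shows "word_eq c (sub (wconcat c e) {n \<in> Field (fst (wconcat c e)). even n})"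
proof -
  have "word_eq (sub c (Field (fst c))) (sub (wconcat c e) {n \<in> Field (fst (wconcat c e)). even n})"
  proof (rule weq_sub[OF c word_wc[OF c e] order_refl])
    show "bij_betw ev (Field (fst c)) {n \<in> Field (fst (wconcat c e)). even n}"
      by (rule bij_betw_byWitness[where f'="\<lambda>m. m div 2"]) (auto elim!: wF_cases)
  qed auto
  thus ?thesis by simp
qed

lemma sub_od:
  assumes c: "is_word c" and e: "is_word e"
  shows "word_eq e (sub (wconcat c e) {n \<in> Field (fst (wconcat c e)). \<not> even n})"
proof -
  have "word_eq (sub e (Field (fst e))) (sub (wconcat c e) {n \<in> Field (fst (wconcat c e)). \<not> even n})"
  proof (rule weq_sub[OF e word_wc[OF c e] order_refl])
    show "bij_betw od (Field (fst e)) {n \<in> Field (fst (wconcat c e)). \<not> even n}"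
      by (rule bij_betw_byWitness[where f'="\<lambda>m. m div 2"]) (auto elim!: wF_cases)
  qed auto
  thus ?thesis by simp
qed

lemma wmap_sub:
  assumes x: "is_word x" and y: "is_word y" and g: "wmap x y g" and S: "S \<subseteq> Field (fst x)"
  shows "word_eq (sub x S) (sub y (g ` S))"
proof (rule weq_sub[OF x y S])
  note gD = wmapD[OF g]
  show "g ` S \<subseteq> Field (fst y)" using S gD(5) by blast
  show "bij_betw g S (g ` S)" using inj_on_subset[OF gD(4) S] by (simp add: bij_betw_def)
  fix n m assume "n \<in> S" "m \<in> S"
  thus "((n, m) \<in> fst x) = ((g n, g m) \<in> fst y)" using gD(2) S by blast
next
  fix n assume "n \<in> S"
  thus "snd y (g n) = snd x n" using wmapD(3)[OF g] S by blast
qed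

lemma split_sub:
  assumes x: "is_word x" and T: "T \<subseteq> Field (fst x)" and T1: "T1 \<subseteq> T"
    and d: "\<And>m n. (m,n) \<in> fst x \<Longrightarrow> m \<in> T \<Longrightarrow> n \<in> T1 \<Longrightarrow> m \<in> T1"
  shows "word_eq (sub x T) (wconcat (sub x T1) (sub x (T - T1)))"
proof -
  have F: "Field (fst (sub x T)) = T" using Field_sub[OF x] T by blast
  have "dc (fst (sub x T)) T1" unfolding dc_def F using T1 d by (auto simp: fst_sub)
  from split_word[OF word_sub[OF x] this] show ?thesis unfolding F sub_sub[OF T1] sub_sub[OF Diff_subset] .
qed

lemma head_at:
  assumes w: "is_word x" and m: "m \<in> Field (fst x)" "\<forall>a'\<in>Field (fst x). (m,a') \<in> fst x"
  shows "\<exists>r. is_word r \<and> word_eq x (wconcat (letter (snd x m)) r)"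
proof -
  have X: "Well_order (fst x)" using WOw[OF w] .
  have d: "dc (fst x) {m}" unfolding dc_def
    using m WO_antisym[OF X] by (auto intro: FieldI1)
  have 1: "word_eq x (wconcat (sub x {m}) (sub x (Field (fst x) - {m})))"
    by (rule split_word[OF w d])
  have 2: "word_eq (sub x {m}) (letter (snd x m))"
  proof (rule weq_full[where f="\<lambda>_. 0"])
    show "is_word (sub x {m})" using word_sub w by blast
    show "is_word (letter (snd x m))" by (rule word_letter)
    have F: "Field (fst (sub x {m})) = {m}" using Field_sub[OF w] m by auto
    show "bij_betw (\<lambda>_. 0) (Field (fst (sub x {m}))) (Field (fst (letter (snd x m))))"
      unfolding F by (simp add: bij_betw_def)
    show "((a, b) \<in> fst (sub x {m})) = ((0, 0) \<in> fst (letter (snd x m)))"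
      if "a \<in> Field (fst (sub x {m}))" "b \<in> Field (fst (sub x {m}))" for a b
      using that F m WO_refl[OF X m(1)] by (simp add: fst_sub letter_def)
    show "snd (letter (snd x m)) 0 = snd (sub x {m}) a" if "a \<in> Field (fst (sub x {m}))" for a
      using that F by (simp add: letter_def)
  qed
  have "word_eq x (wconcat (letter (snd x m)) (sub x (Field (fst x) - {m})))"
    using weq_trans[OF 1 weq_cong[OF 2 weq_refl[OF word_sub[OF w]]]] .
  thus ?thesis using word_sub[OF w] by blast
qed

definition pp :: "nat \<Rightarrow> nat" where "pp n = snd (prod_decode n)"
lemma pp_pe[simp]: "pp (pe k p) = p" by (simp add: pp_def pe_def)

lemma pow_head:
  assumes u: "is_word u" and a: "Well_order \<alpha>" and ne: "Field \<alpha> \<noteq> {}"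
  shows "\<exists>w. is_word w \<and> word_eq (wpow u \<alpha>) (wconcat u w)"
proof -
  let ?W = "wpow u \<alpha>"
  have wW: "is_word ?W" using word_pow[OF u a] .
  obtain k0 where k0: "k0 \<in> Field \<alpha>" "\<forall>k\<in>Field \<alpha>. (k0,k) \<in> \<alpha>" using WO_least[OF a order_refl ne] by blast
  define S where "S = pe k0 ` Field (fst u)"
  have SF: "S \<subseteq> Field (fst ?W)" unfolding S_def using k0 u by auto
  have "dc (fst ?W) S" unfolding dc_def
  proof (intro conjI allI impI)
    show "S \<subseteq> Field (fst ?W)" by (rule SF)
    fix m n assume mn: "(m, n) \<in> fst ?W" "n \<in> S"
    then obtain p where p: "n = pe k0 p" unfolding S_def by blast
    obtain k' p' where "m = pe k' p'" using pe_surj by blast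
    thus "m \<in> S" using mn p k0 WO_antisym[OF a] unfolding S_def by auto
  qed
  hence sp: "word_eq ?W (wconcat (sub ?W S) (sub ?W (Field (fst ?W) - S)))" using split_word[OF wW] by blast
  have "word_eq (sub ?W S) (sub u (Field (fst u)))"
  proof (rule weq_sub[OF wW u SF order_refl])
    show "bij_betw pp S (Field (fst u))"
      by (rule bij_betw_byWitness[where f'="pe k0"]) (auto simp: S_def)
  qed (auto simp: S_def k0 u)
  hence "word_eq ?W (wconcat u (sub ?W (Field (fst ?W) - S)))"
    using congL[OF sp] word_sub[OF wW] by simp
  thus ?thesis using word_sub[OF wW] by blast
qed

lemma PD:
  assumes u: "is_word u" and a: "Well_order \<alpha>" and c: "is_word c" and e: "is_word e"
    and ne: "\<not> empty_word e" and eq: "word_eq (wpow u \<alpha>) (wconcat c e)"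
  shows "\<exists>k\<in>Field \<alpha>. \<exists>f g h. is_word f \<and> is_word g \<and> is_word h \<and> \<not> empty_word g \<and>
     word_eq u (wconcat f g) \<and> word_eq c (wconcat (wpow u (Restr \<alpha> (underS \<alpha> k))) f) \<and>
     word_eq e (wconcat g h)"
proof -
  let ?W = "wpow u \<alpha>" and ?V = "wconcat c e"
  have U: "Well_order (fst u)" using WOw[OF u] .
  have wW: "is_word ?W" using word_pow[OF u a] .
  have W: "Well_order (fst ?W)" using WOw[OF wW] .
  have wV: "is_word ?V" using word_wc[OF c e] .
  obtain g where g: "wmap ?W ?V g" using eq word_eq_iff by blast
  note gD = wmapD[OF g]
  define T where "T = {n \<in> Field (fst ?W). even (g n)}"
  define N where "N = Field (fst ?W) - T"
  have gT: "g ` T = {n \<in> Field (fst ?V). even n}" unfolding T_def using gD(5,6) by auto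
  have gN: "g ` N = {n \<in> Field (fst ?V). \<not> even n}" unfolding N_def T_def using gD(5,6) by auto
  have "N \<noteq> {}"
  proof -
    obtain j where "j \<in> Field (fst e)" using ne unfolding empty_word_def by blast
    hence "od j \<in> g ` N" unfolding gN by simp
    thus ?thesis by blast
  qed
  moreover have NF: "N \<subseteq> Field (fst ?W)" unfolding N_def by blast
  ultimately obtain P0 where P0: "P0 \<in> N" "\<forall>n\<in>N. (P0, n) \<in> fst ?W" using WO_least[OF W] by blast
  obtain k p where kp: "P0 = pe k p" "k \<in> Field \<alpha>" "p \<in> Field (fst u)"
    using P0(1) NF by (blast elim: wpF_cases)
  have Tdc: "m \<in> T" if "(m, n) \<in> fst ?W" "n \<in> T" for m n
  proof -
    have mF: "m \<in> Field (fst ?W)" "n \<in> Field (fst ?W)" using that by (auto intro: FieldI1 FieldI2)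
    have "(g m, g n) \<in> fst ?V" using gD(2)[OF mF] that(1) by simp
    moreover have "even (g n)" using that(2) T_def by blast
    moreover have "g m \<in> Field (fst ?V)" "g n \<in> Field (fst ?V)" using gD(5) mF by auto
    ultimately have "even (g m)" by (auto elim!: wF_cases)
    thus ?thesis using mF T_def by blast
  qed
  have Tchar: "T = {n \<in> Field (fst ?W). (n, P0) \<in> fst ?W \<and> n \<noteq> P0}"
  proof
    show "T \<subseteq> {n \<in> Field (fst ?W). (n, P0) \<in> fst ?W \<and> n \<noteq> P0}"
    proof
      fix n assume n: "n \<in> T"
      have nF: "n \<in> Field (fst ?W)" and P0F: "P0 \<in> Field (fst ?W)" using n T_def P0(1) NF by auto
      have "n \<noteq> P0" using n P0(1) N_def by blast
      moreover have "(n, P0) \<in> fst ?W"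
      proof (rule ccontr)
        assume "(n, P0) \<notin> fst ?W"
        hence "(P0, n) \<in> fst ?W" using WO_total[OF W nF P0F] by blast
        hence "P0 \<in> T" using Tdc n by blast
        thus False using P0(1) N_def by blast
      qed
      ultimately show "n \<in> {n \<in> Field (fst ?W). (n, P0) \<in> fst ?W \<and> n \<noteq> P0}" using nF by blast
    qed
    show "{n \<in> Field (fst ?W). (n, P0) \<in> fst ?W \<and> n \<noteq> P0} \<subseteq> T"
    proof
      fix n assume n: "n \<in> {n \<in> Field (fst ?W). (n, P0) \<in> fst ?W \<and> n \<noteq> P0}"
      show "n \<in> T"
      proof (rule ccontr)
        assume "n \<notin> T"
        hence "n \<in> N" using n N_def by blast
        hence "(P0, n) \<in> fst ?W" using P0 by blast
        thus False using n WO_antisym[OF W] by blast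
      qed
    qed
  qed
  define U2 where "U2 = {p' \<in> Field (fst u). (p', p) \<in> fst u \<and> p' \<noteq> p}"
  define \<beta> where "\<beta> = Restr \<alpha> (underS \<alpha> k)"
  have b: "Well_order \<beta>" unfolding \<beta>_def using Well_order_Restr[OF a] .
  have Fb: "Field \<beta> = {k' \<in> Field \<alpha>. k' \<noteq> k \<and> (k', k) \<in> \<alpha>}"
    unfolding \<beta>_def Field_Restr_WO[OF a] underS_def by blast
  define T1 where "T1 = {n. \<exists>k' p'. n = pe k' p' \<and> k' \<in> Field \<beta> \<and> p' \<in> Field (fst u)}"
  define T2 where "T2 = pe k ` U2"
  define N2 where "N2 = pe k ` (Field (fst u) - U2)"
  define N3 where "N3 = {n. \<exists>k' p'. n = pe k' p' \<and> k' \<in> Field \<alpha> \<and> k' \<noteq> k \<and> (k, k') \<in> \<alpha> \<and> p' \<in> Field (fst u)}"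
  have memW: "n \<in> Field (fst ?W) \<Longrightarrow> \<exists>k' p'. n = pe k' p' \<and> k' \<in> Field \<alpha> \<and> p' \<in> Field (fst u)" for n
    by (blast elim: wpF_cases)
  have TT: "T = T1 \<union> T2"
    unfolding Tchar T1_def T2_def Fb U2_def kp(1) using kp u by (auto elim!: wpF_cases)
  have NN: "N = N2 \<union> N3"
  proof -
    have "N = {n \<in> Field (fst ?W). \<not> ((n, P0) \<in> fst ?W \<and> n \<noteq> P0)}" unfolding N_def Tchar by blast
    also have "\<dots> = N2 \<union> N3"
      unfolding N2_def N3_def U2_def kp(1) using kp u WO_total[OF a] WO_antisym[OF a]
      by (auto elim!: wpF_cases) (metis WO_total[OF a])+
    finally show ?thesis .
  qed
  have TF: "T \<subseteq> Field (fst ?W)" unfolding T_def by blast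
  have T1F: "T1 \<subseteq> Field (fst ?W)" unfolding T1_def Fb using u by auto
  have UF: "U2 \<subseteq> Field (fst u)" unfolding U2_def by blast
  have T2F: "T2 \<subseteq> Field (fst ?W)" unfolding T2_def using u kp UF by auto
  have N2F: "N2 \<subseteq> Field (fst ?W)" unfolding N2_def using u kp by auto
  have T12: "T - T1 = T2" unfolding TT T1_def T2_def Fb by auto
  have N23: "N - N2 = N3" unfolding NN N2_def N3_def by auto
  have cT: "word_eq c (sub ?W T)"
    using weq_trans[OF sub_ev[OF c e, folded gT] weq_sym[OF wmap_sub[OF wW wV g TF]]] .
  have "word_eq (sub ?W T) (wconcat (sub ?W T1) (sub ?W (T - T1)))"
  proof (rule split_sub[OF wW TF])
    show "T1 \<subseteq> T" unfolding TT by blast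
    fix m n assume mn: "(m, n) \<in> fst ?W" "m \<in> T" "n \<in> T1"
    then obtain k2 p2 where n: "n = pe k2 p2" "k2 \<in> Field \<beta>" unfolding T1_def by blast
    show "m \<in> T1"
    proof (rule ccontr)
      assume "m \<notin> T1"
      hence "m \<in> T2" using mn(2) TT by blast
      then obtain p1 where m: "m = pe k p1" unfolding T2_def by blast
      have "(k \<noteq> k2 \<and> (k, k2) \<in> \<alpha>) \<or> k = k2" using mn(1) m n by auto
      moreover have "k2 \<noteq> k" "(k2, k) \<in> \<alpha>" using n(2) Fb by auto
      ultimately show False using WO_antisym[OF a] by blast
    qed
  qed
  hence cT': "word_eq (sub ?W T) (wconcat (sub ?W T1) (sub ?W T2))" unfolding T12 .
  have c4: "word_eq (sub ?W T1) (sub (wpow u \<beta>) (Field (fst (wpow u \<beta>))))"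
  proof (rule weq_sub[OF wW word_pow[OF u b] T1F order_refl])
    have "T1 = Field (fst (wpow u \<beta>))" unfolding T1_def using u by (auto elim!: wpF_cases)
    thus "bij_betw id T1 (Field (fst (wpow u \<beta>)))" by simp
    fix n m assume nm: "n \<in> T1" "m \<in> T1"
    then obtain k1 p1 k2 p2 where "n = pe k1 p1" "k1 \<in> Field \<beta>" "p1 \<in> Field (fst u)"
      "m = pe k2 p2" "k2 \<in> Field \<beta>" "p2 \<in> Field (fst u)" unfolding T1_def by blast
    thus "((n, m) \<in> fst ?W) = ((id n, id m) \<in> fst (wpow u \<beta>))"
      using Fb by (auto simp: \<beta>_def underS_def)
  next
    fix n assume "n \<in> T1"
    thus "snd (wpow u \<beta>) (id n) = snd ?W n" unfolding T1_def by auto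
  qed
  have c5: "word_eq (sub ?W T2) (sub u U2)"
  proof (rule weq_sub[OF wW u T2F UF])
    show "bij_betw pp T2 U2" by (rule bij_betw_byWitness[where f'="pe k"]) (auto simp: T2_def)
  qed (use kp UF in \<open>auto simp: T2_def\<close>)
  have cpart: "word_eq c (wconcat (wpow u \<beta>) (sub u U2))"
    using weq_trans[OF cT weq_trans[OF cT' weq_cong[OF c4[simplified] c5]]] .
  have eN: "word_eq e (sub ?W N)"
    using weq_trans[OF sub_od[OF c e, folded gN] weq_sym[OF wmap_sub[OF wW wV g NF]]] .
  have "word_eq (sub ?W N) (wconcat (sub ?W N2) (sub ?W (N - N2)))"
  proof (rule split_sub[OF wW NF])
    show "N2 \<subseteq> N" unfolding NN by blast
    fix m n assume mn: "(m, n) \<in> fst ?W" "m \<in> N" "n \<in> N2"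
    then obtain p2 where n: "n = pe k p2" unfolding N2_def by blast
    show "m \<in> N2"
    proof (rule ccontr)
      assume "m \<notin> N2"
      hence "m \<in> N3" using mn(2) NN by blast
      then obtain k1 p1 where m: "m = pe k1 p1" "k1 \<noteq> k" "(k, k1) \<in> \<alpha>" unfolding N3_def by blast
      have "(k1 \<noteq> k \<and> (k1, k) \<in> \<alpha>) \<or> k1 = k" using mn(1) m n by auto
      thus False using m WO_antisym[OF a] by blast
    qed
  qed
  hence eN': "word_eq (sub ?W N) (wconcat (sub ?W N2) (sub ?W N3))" unfolding N23 .
  have e4: "word_eq (sub ?W N2) (sub u (Field (fst u) - U2))"
  proof (rule weq_sub[OF wW u N2F Diff_subset])
    show "bij_betw pp N2 (Field (fst u) - U2)" by (rule bij_betw_byWitness[where f'="pe k"]) (auto simp: N2_def)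
  qed (use kp in \<open>auto simp: N2_def\<close>)
  have epart: "word_eq e (wconcat (sub u (Field (fst u) - U2)) (sub ?W N3))"
    using weq_trans[OF eN weq_trans[OF eN' weq_cong[OF e4 weq_refl[OF word_sub[OF wW]]]]] .
  have "dc (fst u) U2" unfolding dc_def
  proof (intro conjI allI impI)
    show "U2 \<subseteq> Field (fst u)" by (rule UF)
    fix p1 p2 assume pp: "(p1, p2) \<in> fst u" "p2 \<in> U2"
    hence "(p1, p) \<in> fst u" "p1 \<in> Field (fst u)" using WO_trans[OF U] U2_def by (auto intro: FieldI1)
    moreover have "p1 \<noteq> p" using pp WO_antisym[OF U] U2_def by blast
    ultimately show "p1 \<in> U2" unfolding U2_def by blast
  qed
  hence upart: "word_eq u (wconcat (sub u U2) (sub u (Field (fst u) - U2)))" using split_word[OF u] by blast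
  have gne: "\<not> empty_word (sub u (Field (fst u) - U2))"
    unfolding empty_word_def Field_sub[OF u] using kp(3) U2_def by blast
  show ?thesis using kp(2) upart cpart epart gne word_sub[OF u] word_sub[OF wW] \<beta>_def by blast
qed

lemma str_lessE:
  assumes "str_less x y"
  obtains c a b z z' where "a < b" "is_word c" "is_word z" "is_word z'"
    "word_eq x (wconcat c (wconcat (letter a) z))" "word_eq y (wconcat c (wconcat (letter b) z'))"
  using assms unfolding str_less_def by blast

lemma str_lessI:
  "a < b \<Longrightarrow> is_word c \<Longrightarrow> is_word z \<Longrightarrow> is_word z' \<Longrightarrow>
    word_eq x (wconcat c (wconcat (letter a) z)) \<Longrightarrow> word_eq y (wconcat c (wconcat (letter b) z')) \<Longrightarrow>
    str_less x y"
  unfolding str_less_def by blast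

lemma cmp_half:
  assumes x: "is_word x" and y: "is_word y" and emb: "embed (fst x) (fst y) f"
  shows "is_prefix x y \<or> str_less x y \<or> str_less y x"
proof -
  have X: "Well_order (fst x)" and Y: "Well_order (fst y)" using WOw[OF x] WOw[OF y] by auto
  have inj: "inj_on f (Field (fst x))" using embed_inj_on[OF X emb] .
  have cmp: "\<And>a b. (a,b) \<in> fst x \<Longrightarrow> (f a, f b) \<in> fst y"
    using embed_compat[OF emb] unfolding compat_def by blast
  have fF: "\<And>a. a \<in> Field (fst x) \<Longrightarrow> f a \<in> Field (fst y)" using embed_Field[OF emb] by blast
  have ofl: "ofilter (fst y) (f ` Field (fst x))" using embed_Field_ofilter[OF X Y emb] .
  have dn: "\<And>m a. (m, f a) \<in> fst y \<Longrightarrow> a \<in> Field (fst x) \<Longrightarrow> m \<in> f ` Field (fst x)"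
    using ofl unfolding ofilter_def under_def by blast
  have refl: "\<And>a b. a \<in> Field (fst x) \<Longrightarrow> b \<in> Field (fst x) \<Longrightarrow> (f a, f b) \<in> fst y \<Longrightarrow> (a,b) \<in> fst x"
  proof (rule ccontr)
    fix a b assume ab: "a \<in> Field (fst x)" "b \<in> Field (fst x)" "(f a, f b) \<in> fst y" "(a,b) \<notin> fst x"
    hence "(b,a) \<in> fst x" using WO_total[OF X ab(1,2)] by blast
    hence "(f b, f a) \<in> fst y" by (rule cmp)
    hence "f a = f b" using WO_antisym[OF Y ab(3)] by simp
    hence "a = b" using inj ab(1,2) unfolding inj_on_def by blast
    thus False using ab(4) WO_refl[OF X ab(1)] by simp
  qed
  define D where "D = {i \<in> Field (fst x). snd y (f i) \<noteq> snd x i}"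
  show ?thesis
  proof (cases "D = {}")
    case True
    define F where "F = f ` Field (fst x)"
    have FF: "F \<subseteq> Field (fst y)" unfolding F_def using fF by blast
    have "word_eq (sub x (Field (fst x))) (sub y F)"
    proof (rule weq_sub[OF x y order_refl FF])
      show "bij_betw f (Field (fst x)) F" unfolding F_def using inj by (simp add: bij_betw_def)
      show "((a, b) \<in> fst x) = ((f a, f b) \<in> fst y)" if "a \<in> Field (fst x)" "b \<in> Field (fst x)" for a b
        using that cmp refl by blast
      show "snd y (f a) = snd x a" if "a \<in> Field (fst x)" for a using that True D_def by blast
    qed
    hence xF: "word_eq x (sub y F)" by simp
    have "dc (fst y) F" unfolding dc_def F_def using FF dn F_def by blast
    hence "word_eq y (wconcat (sub y F) (sub y (Field (fst y) - F)))" using split_word[OF y] by blast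
    hence "word_eq y (wconcat x (sub y (Field (fst y) - F)))" using congL[OF _ weq_sym[OF xF] word_sub[OF y]] by blast
    thus ?thesis unfolding is_prefix_def using word_sub[OF y] by blast
  next
    case False
    have DF: "D \<subseteq> Field (fst x)" unfolding D_def by blast
    obtain p where p: "p \<in> D" "\<forall>i\<in>D. (p, i) \<in> fst x" using WO_least[OF X DF False] by blast
    have pF: "p \<in> Field (fst x)" using p DF by blast
    define P where "P = {i \<in> Field (fst x). (i, p) \<in> fst x \<and> i \<noteq> p}"
    define Q where "Q = f ` P"
    have PF: "P \<subseteq> Field (fst x)" unfolding P_def by blast
    have QF: "Q \<subseteq> Field (fst y)" unfolding Q_def using PF fF by blast
    have dP: "dc (fst x) P" unfolding dc_def
    proof (intro conjI allI impI)
      show "P \<subseteq> Field (fst x)" by (rule PF)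
      fix i j assume ij: "(i, j) \<in> fst x" "j \<in> P"
      hence "(i, p) \<in> fst x" "i \<in> Field (fst x)" using WO_trans[OF X] P_def by (auto intro: FieldI1)
      moreover have "i \<noteq> p" using ij WO_antisym[OF X] P_def by blast
      ultimately show "i \<in> P" unfolding P_def by blast
    qed
    have dQ: "dc (fst y) Q" unfolding dc_def
    proof (intro conjI allI impI)
      show "Q \<subseteq> Field (fst y)" by (rule QF)
      fix m n assume mn: "(m, n) \<in> fst y" "n \<in> Q"
      then obtain j where j: "j \<in> P" "n = f j" unfolding Q_def by blast
      have jF: "j \<in> Field (fst x)" using j PF by blast
      obtain i where i: "i \<in> Field (fst x)" "m = f i" using dn[of m j] mn j jF by blast
      have "(i, j) \<in> fst x" using refl[OF i(1) jF] mn j i by simp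
      hence "i \<in> P" using dP j unfolding dc_def by blast
      thus "m \<in> Q" unfolding Q_def using i by blast
    qed
    have PQ: "word_eq (sub x P) (sub y Q)"
    proof (rule weq_sub[OF x y PF QF])
      show "bij_betw f P Q" unfolding Q_def using inj_on_subset[OF inj PF] by (simp add: bij_betw_def)
      show "((a, b) \<in> fst x) = ((f a, f b) \<in> fst y)" if "a \<in> P" "b \<in> P" for a b
        using that PF cmp refl by blast
      show "snd y (f a) = snd x a" if "a \<in> P" for a
      proof (rule ccontr)
        assume "snd y (f a) \<noteq> snd x a"
        hence "a \<in> D" using that PF D_def by blast
        hence "(p, a) \<in> fst x" using p by blast
        thus False using that P_def WO_antisym[OF X] by blast
      qed
    qed
    have sx: "word_eq x (wconcat (sub x P) (sub x (Field (fst x) - P)))" using split_word[OF x dP] .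
    have sy: "word_eq y (wconcat (sub y Q) (sub y (Field (fst y) - Q)))" using split_word[OF y dQ] .
    have hx: "\<exists>r. is_word r \<and> word_eq (sub x (Field (fst x) - P)) (wconcat (letter (snd x p)) r)"
    proof -
      have F: "Field (fst (sub x (Field (fst x) - P))) = Field (fst x) - P" using Field_sub[OF x] by blast
      have "p \<in> Field (fst x) - P" using pF P_def by blast
      moreover have "\<forall>a\<in>Field (fst x) - P. (p, a) \<in> fst x"
      proof
        fix a assume a: "a \<in> Field (fst x) - P"
        show "(p, a) \<in> fst x"
        proof (rule ccontr)
          assume "(p, a) \<notin> fst x"
          hence "(a, p) \<in> fst x" "a \<noteq> p" using WO_total[OF X pF] a WO_refl[OF X pF] by auto
          thus False using a P_def by blast
        qed
      qed
      ultimately show ?thesis using head_at[OF word_sub[OF x], of p] F by (simp add: fst_sub)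
    qed
    have fp: "f p \<in> Field (fst y) - Q"
    proof -
      have "f p \<notin> Q" unfolding Q_def using inj pF PF P_def unfolding inj_on_def by blast
      thus ?thesis using fF pF by blast
    qed
    have hy: "\<exists>r. is_word r \<and> word_eq (sub y (Field (fst y) - Q)) (wconcat (letter (snd y (f p))) r)"
    proof -
      have F: "Field (fst (sub y (Field (fst y) - Q))) = Field (fst y) - Q" using Field_sub[OF y] by blast
      have "\<forall>m\<in>Field (fst y) - Q. (f p, m) \<in> fst y"
      proof
        fix m assume m: "m \<in> Field (fst y) - Q"
        show "(f p, m) \<in> fst y"
        proof (rule ccontr)
          assume "(f p, m) \<notin> fst y"
          hence mp: "(m, f p) \<in> fst y" "m \<noteq> f p" using WO_total[OF Y] fp m WO_refl[OF Y] by blast+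
          then obtain i where i: "i \<in> Field (fst x)" "m = f i" using dn[OF _ pF] by blast
          have "(i, p) \<in> fst x" using refl[OF i(1) pF] mp i by simp
          moreover have "i \<noteq> p" using mp i by blast
          ultimately have "m \<in> Q" unfolding Q_def P_def using i by blast
          thus False using m by blast
        qed
      qed
      thus ?thesis using head_at[OF word_sub[OF y], of "f p"] F fp by (simp add: fst_sub)
    qed
    obtain r where r: "is_word r" "word_eq (sub x (Field (fst x) - P)) (wconcat (letter (snd x p)) r)" using hx by blast
    obtain r' where r': "is_word r'" "word_eq (sub y (Field (fst y) - Q)) (wconcat (letter (snd y (f p))) r')" using hy by blast
    have X1: "word_eq x (wconcat (sub x P) (wconcat (letter (snd x p)) r))"
      using congR[OF sx r(2) word_sub[OF x]] .
    have Y1: "word_eq y (wconcat (sub x P) (wconcat (letter (snd y (f p))) r'))"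
      using congL[OF congR[OF sy r'(2) word_sub[OF y]] weq_sym[OF PQ] word_wc[OF word_letter r'(1)]] .
    have ne: "snd x p \<noteq> snd y (f p)" using p D_def by auto
    show ?thesis
    proof (cases "snd x p < snd y (f p)")
      case True
      thus ?thesis using str_lessI[OF True word_sub[OF x] r(1) r'(1) X1 Y1] by blast
    next
      case False
      hence "snd y (f p) < snd x p" using ne by simp
      thus ?thesis using str_lessI[OF _ word_sub[OF x] r'(1) r(1) Y1 X1] by blast
    qed
  qed
qed

lemma cmp: assumes x: "is_word x" and y: "is_word y"
  shows "is_prefix x y \<or> is_prefix y x \<or> str_less x y \<or> str_less y x"
proof -
  have X: "Well_order (fst x)" and Y: "Well_order (fst y)" using WOw[OF x] WOw[OF y] by auto
  from ordLeq_total[OF X Y] show ?thesis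
  proof
    assume "(fst x, fst y) \<in> ordLeq"
    then obtain f where "embed (fst x) (fst y) f" unfolding ordLeq_def by blast
    thus ?thesis using cmp_half[OF x y] by blast
  next
    assume "(fst y, fst x) \<in> ordLeq"
    then obtain f where "embed (fst y) (fst x) f" unfolding ordLeq_def by blast
    thus ?thesis using cmp_half[OF y x] by blast
  qed
qed




lemma starts_cat1:
  assumes e: "is_word e" "starts e h" and t: "is_word t" shows "starts (wconcat e t) h"
proof -
  obtain r where r: "is_word r" "word_eq e (wconcat (letter h) r)" using e(2) unfolding starts_def by blast
  have "word_eq (wconcat e t) (wconcat (wconcat (letter h) r) t)"
    using weq_cong[OF r(2) weq_refl[OF t]] .
  hence "word_eq (wconcat e t) (wconcat (letter h) (wconcat r t))" by (rule assocR)
  thus ?thesis unfolding starts_def using word_wc[OF r(1) t] by blast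
qed

lemma starts_cat0:
  assumes "empty_word e" "starts t h" shows "starts (wconcat e t) h"
  using starts_weq[OF assms(2) left_unit[OF assms(1)]] .

lemma NP:
  assumes v: "is_word v" and w: "is_word w" and s: "is_word s" and ne: "\<not> empty_word s"
    and eq: "word_eq v (wconcat w s)" and le: "lex_le v w"
  shows False
  using le unfolding lex_le_def
proof
  assume "is_prefix v w"
  then obtain r where r: "is_word r" "word_eq w (wconcat v r)" unfolding is_prefix_def by blast
  have "word_eq v (wconcat (wconcat v r) s)" using congL[OF eq r(2) s] .
  hence "word_eq (wconcat v emp) (wconcat v (wconcat r s))"
    using weq_trans[OF right_unit[OF empty_emp] assocR] by blast
  hence "word_eq emp (wconcat r s)" using cancel[OF v word_emp word_wc[OF r(1) s]] by blast
  hence "empty_word (wconcat r s)" using weq_empty empty_emp by blast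
  thus False using ne empty_wc by blast
next
  assume "str_less v w"
  then obtain c a b z z' where cz: "a < b" "is_word c" "is_word z" "is_word z'"
    "word_eq v (wconcat c (wconcat (letter a) z))" "word_eq w (wconcat c (wconcat (letter b) z'))"
    by (rule str_lessE)
  have "word_eq v (wconcat (wconcat c (wconcat (letter b) z')) s)" using congL[OF eq cz(6) s] .
  hence "word_eq v (wconcat c (wconcat (wconcat (letter b) z') s))" by (rule assocR)
  hence "word_eq v (wconcat c (wconcat (letter b) (wconcat z' s)))"
    using congR[OF _ assoc cz(2)] by blast
  hence "word_eq (wconcat c (wconcat (letter a) z)) (wconcat c (wconcat (letter b) (wconcat z' s)))"
    using weq_trans[OF weq_sym[OF cz(5)]] by blast
  hence "word_eq (wconcat (letter a) z) (wconcat (letter b) (wconcat z' s))"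
    using cancel[OF cz(2) word_wc[OF word_letter cz(3)] word_wc[OF word_letter word_wc[OF cz(4) s]]] by blast
  hence "a = b" using letter_inj[OF word_wc[OF cz(4) s]] by blast
  thus False using cz(1) by simp
qed

lemma startsI: "is_word r \<Longrightarrow> word_eq x (wconcat (letter a) r) \<Longrightarrow> starts x a"
  unfolding starts_def by blast

lemma starts_eq_cat:
  assumes "is_word e" "starts e h" "is_word t" "word_eq x (wconcat e t)"
  shows "starts x h"
  using starts_weq[OF starts_cat1[OF assms(1-3)] assms(4)] .

lemma AS:
  assumes v: "is_word v" and z: "is_word z" and le: "lex_le v z" and sl: "str_less z v"
  shows False
proof -
  obtain c a b r r' where cz: "a < b" "is_word c" "is_word r" "is_word r'"
    "word_eq z (wconcat c (wconcat (letter a) r))" "word_eq v (wconcat c (wconcat (letter b) r'))"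
    using sl by (rule str_lessE)
  have wAr: "is_word (wconcat (letter a) r)" using word_wc[OF word_letter cz(3)] .
  have wBr: "is_word (wconcat (letter b) r')" using word_wc[OF word_letter cz(4)] .
  show False using le unfolding lex_le_def
  proof
    assume "is_prefix v z"
    then obtain s where s: "is_word s" "word_eq z (wconcat v s)" unfolding is_prefix_def by blast
    have "word_eq z (wconcat (wconcat c (wconcat (letter b) r')) s)" using congL[OF s(2) cz(6) s(1)] .
    hence "word_eq z (wconcat c (wconcat (wconcat (letter b) r') s))" by (rule assocR)
    hence "word_eq z (wconcat c (wconcat (letter b) (wconcat r' s)))" using congR[OF _ assoc cz(2)] by blast
    hence "word_eq (wconcat c (wconcat (letter a) r)) (wconcat c (wconcat (letter b) (wconcat r' s)))"
      using weq_trans[OF weq_sym[OF cz(5)]] by blast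
    hence "word_eq (wconcat (letter a) r) (wconcat (letter b) (wconcat r' s))"
      using cancel[OF cz(2) wAr word_wc[OF word_letter word_wc[OF cz(4) s(1)]]] by blast
    hence "a = b" using letter_inj[OF word_wc[OF cz(4) s(1)]] by blast
    thus False using cz(1) by simp
  next
    assume "str_less v z"
    then obtain c2 a2 b2 y y' where cy: "a2 < b2" "is_word c2" "is_word y" "is_word y'"
      "word_eq v (wconcat c2 (wconcat (letter a2) y))" "word_eq z (wconcat c2 (wconcat (letter b2) y'))"
      by (rule str_lessE)
    have wAy: "is_word (wconcat (letter a2) y)" using word_wc[OF word_letter cy(3)] .
    have wBy: "is_word (wconcat (letter b2) y')" using word_wc[OF word_letter cy(4)] .
    have eqv: "word_eq (wconcat c (wconcat (letter b) r')) (wconcat c2 (wconcat (letter a2) y))"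
      using weq_trans[OF weq_sym[OF cz(6)] cy(5)] .
    have eqz: "word_eq (wconcat c (wconcat (letter a) r)) (wconcat c2 (wconcat (letter b2) y'))"
      using weq_trans[OF weq_sym[OF cz(5)] cy(6)] .
    show False using levi'[OF cz(2) wBr cy(2) wAy eqv]
    proof
      assume "\<exists>e. is_word e \<and> word_eq c2 (wconcat c e) \<and> word_eq (wconcat (letter b) r') (wconcat e (wconcat (letter a2) y))"
      then obtain e where e: "is_word e" "word_eq c2 (wconcat c e)"
        "word_eq (wconcat (letter b) r') (wconcat e (wconcat (letter a2) y))" by blast
      have "word_eq (wconcat c (wconcat (letter a) r)) (wconcat (wconcat c e) (wconcat (letter b2) y'))"
        using congL[OF eqz e(2) wBy] .
      hence "word_eq (wconcat c (wconcat (letter a) r)) (wconcat c (wconcat e (wconcat (letter b2) y')))"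
        by (rule assocR)
      hence ar: "word_eq (wconcat (letter a) r) (wconcat e (wconcat (letter b2) y'))"
        using cancel[OF cz(2) wAr word_wc[OF e(1) wBy]] by blast
      show False
      proof (cases "empty_word e")
        case True
        have "word_eq (wconcat (letter b) r') (wconcat (letter a2) y)"
          using weq_trans[OF e(3) left_unit[OF True]] .
        hence "b = a2" using letter_inj[OF cy(3)] by blast
        moreover have "word_eq (wconcat (letter a) r) (wconcat (letter b2) y')"
          using weq_trans[OF ar left_unit[OF True]] .
        hence "a = b2" using letter_inj[OF cy(4)] by blast
        ultimately show False using cz(1) cy(1) by simp
      next
        case False
        then obtain h where h: "starts e h" using head[OF e(1)] by blast
        have "starts (wconcat (letter b) r') h" using starts_eq_cat[OF e(1) h wAy e(3)] .
        hence "b = h" using starts_unique[OF starts_letter[OF cz(4)]] by blast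
        moreover have "starts (wconcat (letter a) r) h" using starts_eq_cat[OF e(1) h wBy ar] .
        hence "a = h" using starts_unique[OF starts_letter[OF cz(3)]] by blast
        ultimately show False using cz(1) by simp
      qed
    next
      assume "\<exists>e. is_word e \<and> \<not> empty_word e \<and> word_eq c (wconcat c2 e) \<and> word_eq (wconcat (letter a2) y) (wconcat e (wconcat (letter b) r'))"
      then obtain e where e: "is_word e" "\<not> empty_word e" "word_eq c (wconcat c2 e)"
        "word_eq (wconcat (letter a2) y) (wconcat e (wconcat (letter b) r'))" by blast
      have "word_eq (wconcat c2 (wconcat (letter b2) y')) (wconcat (wconcat c2 e) (wconcat (letter a) r))"
        using congL[OF weq_sym[OF eqz] e(3) wAr] .
      hence "word_eq (wconcat c2 (wconcat (letter b2) y')) (wconcat c2 (wconcat e (wconcat (letter a) r)))"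
        by (rule assocR)
      hence br: "word_eq (wconcat (letter b2) y') (wconcat e (wconcat (letter a) r))"
        using cancel[OF cy(2) wBy word_wc[OF e(1) wAr]] by blast
      obtain h where h: "starts e h" using head[OF e(1) e(2)] by blast
      have "starts (wconcat (letter a2) y) h" using starts_eq_cat[OF e(1) h wBr e(4)] .
      hence "a2 = h" using starts_unique[OF starts_letter[OF cy(3)]] by blast
      moreover have "starts (wconcat (letter b2) y') h" using starts_eq_cat[OF e(1) h wAr br] .
      hence "b2 = h" using starts_unique[OF starts_letter[OF cy(4)]] by blast
      ultimately show False using cy(1) by simp
    qed
  qed
qed




lemma WO_empty: "Well_order ({}::nat rel)"
  using word_emp unfolding is_word_def emp_def by simp

lemma prime_nonempty:
  assumes "is_word v" "primitive v" shows "\<not> empty_word v"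
proof
  assume e: "empty_word v"
  have "word_eq v (wpow v {})" using empty_weq[OF e pow_empty] by simp
  hence "card (Field ({}::nat rel)) = 1" using assms(2) WO_empty assms(1) unfolding primitive_def by blast
  thus False by simp
qed

lemma prim_use:
  assumes "primitive v" "is_word u" "Well_order \<beta>" "word_eq v (wpow u \<beta>)"
  shows "word_eq u v"
  using assms unfolding primitive_def by blast

lemma proper_suffixI:
  "is_word z \<Longrightarrow> \<not> empty_word z \<Longrightarrow> is_word y \<Longrightarrow> \<not> empty_word y \<Longrightarrow> word_eq x (wconcat y z) \<Longrightarrow> proper_suffix z x"
  unfolding proper_suffix_def by blast

theorem mainTheorem10:
  fixes u v :: "'a::{finite,linorder} tword" and \<alpha> :: "nat rel"
  assumes "prime_word u" and "prime_word v" and "lex_less u v"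
    and "Well_order \<alpha>"
  shows "lex_less (wpow u \<alpha>) (wconcat (wpow u \<alpha>) v) \<and> lex_le (wconcat (wpow u \<alpha>) v) v"
proof -
  have u: "is_word u" and pu: "primitive u" using assms(1) unfolding prime_word_def by auto
  have v: "is_word v" and pv: "primitive v" and suf: "\<And>z. proper_suffix z v \<Longrightarrow> lex_le v z"
    using assms(2) unfolding prime_word_def by auto
  have une: "\<not> empty_word u" using prime_nonempty[OF u pu] .
  have vne: "\<not> empty_word v" using prime_nonempty[OF v pv] .
  have luv: "lex_le u v" and nuv: "\<not> word_eq u v" using assms(3) unfolding lex_less_def by auto
  have \<alpha>: "Well_order \<alpha>" by (rule assms(4))
  define P where "P = wpow u \<alpha>"
  have wP: "is_word P" using word_pow[OF u \<alpha>] P_def by simp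
  have wx: "is_word (wconcat P v)" using word_wc[OF wP v] .
  have part1: "lex_less P (wconcat P v)"
  proof -
    have "is_prefix P (wconcat P v)" unfolding is_prefix_def using v weq_refl[OF wx] by blast
    moreover have "\<not> word_eq P (wconcat P v)" using ext_empty[OF wP v] vne by blast
    ultimately show ?thesis unfolding lex_less_def lex_le_def by blast
  qed
  have part2: "lex_le (wconcat P v) v"
  proof (cases "Field \<alpha> = {}")
    case True
    have Pe: "empty_word P" using pow_empty[OF True] P_def by simp
    have "word_eq v (wconcat (wconcat P v) emp)"
      using weq_sym[OF weq_trans[OF right_unit[OF empty_emp] left_unit[OF Pe]]] .
    thus ?thesis unfolding lex_le_def is_prefix_def using word_emp by blast
  next
    case False
    have Pne: "\<not> empty_word P" using pow_nonempty[OF u False une] P_def by simp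
    obtain w where w: "is_word w" "word_eq P (wconcat u w)" using pow_head[OF u \<alpha> False] P_def by blast
    show ?thesis using luv[unfolded lex_le_def]
    proof
      assume "str_less u v"
      then obtain c a b z z' where cz: "a < b" "is_word c" "is_word z" "is_word z'"
        "word_eq u (wconcat c (wconcat (letter a) z))" "word_eq v (wconcat c (wconcat (letter b) z'))"
        by (rule str_lessE)
      have "word_eq P (wconcat (wconcat c (wconcat (letter a) z)) w)" using congL[OF w(2) cz(5) w(1)] .
      hence "word_eq P (wconcat c (wconcat (wconcat (letter a) z) w))" by (rule assocR)
      hence "word_eq P (wconcat c (wconcat (letter a) (wconcat z w)))" using congR[OF _ assoc cz(2)] by blast
      hence "word_eq (wconcat P v) (wconcat (wconcat c (wconcat (letter a) (wconcat z w))) v)"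
        using congL[OF weq_refl[OF wx]] v by blast
      hence "word_eq (wconcat P v) (wconcat c (wconcat (wconcat (letter a) (wconcat z w)) v))" by (rule assocR)
      hence "word_eq (wconcat P v) (wconcat c (wconcat (letter a) (wconcat (wconcat z w) v)))"
        using congR[OF _ assoc cz(2)] by blast
      hence "str_less (wconcat P v) v"
        using str_lessI[OF cz(1) cz(2) word_wc[OF word_wc[OF cz(3) w(1)] v] cz(4) _ cz(6)] by blast
      thus ?thesis unfolding lex_le_def by blast
    next
      assume "is_prefix u v"
      then obtain t where t: "is_word t" "word_eq v (wconcat u t)" unfolding is_prefix_def by blast
      show ?thesis
      proof (rule ccontr)
        assume "\<not> lex_le (wconcat P v) v"
        hence nle: "\<not> (is_prefix (wconcat P v) v \<or> str_less (wconcat P v) v)" unfolding lex_le_def .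
        hence "is_prefix v (wconcat P v) \<or> str_less v (wconcat P v)" using cmp[OF wx v] by blast
        thus False
        proof
          assume "str_less v (wconcat P v)"
          then obtain c a b r r' where cr: "a < b" "is_word c" "is_word r" "is_word r'"
            "word_eq v (wconcat c (wconcat (letter a) r))" "word_eq (wconcat P v) (wconcat c (wconcat (letter b) r'))"
            by (rule str_lessE)
          have wAr: "is_word (wconcat (letter a) r)" using word_wc[OF word_letter cr(3)] .
          have wBr: "is_word (wconcat (letter b) r')" using word_wc[OF word_letter cr(4)] .
          show False using levi'[OF wP v cr(2) wBr cr(6)]
          proof
            assume "\<exists>e. is_word e \<and> word_eq c (wconcat P e) \<and> word_eq v (wconcat e (wconcat (letter b) r'))"
            then obtain e where e: "is_word e" "word_eq c (wconcat P e)" "word_eq v (wconcat e (wconcat (letter b) r'))"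
              by blast
            define z where "z = wconcat e (wconcat (letter a) r)"
            have wz: "is_word z" using word_wc[OF e(1) wAr] z_def by simp
            have zne: "\<not> empty_word z" unfolding z_def empty_wc by (simp add: empty_word_def)
            have "word_eq v (wconcat (wconcat P e) (wconcat (letter a) r))" using congL[OF cr(5) e(2) wAr] .
            hence "word_eq v (wconcat P z)" unfolding z_def by (rule assocR)
            hence "lex_le v z" using suf proper_suffixI[OF wz zne wP Pne] by blast
            moreover have "str_less z v"
              using str_lessI[OF cr(1) e(1) cr(3) cr(4) _ e(3)] weq_refl[OF wz] z_def by blast
            ultimately show False using AS[OF v wz] by blast
          next
            assume "\<exists>e. is_word e \<and> \<not> empty_word e \<and> word_eq P (wconcat c e) \<and> word_eq (wconcat (letter b) r') (wconcat e v)"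
            then obtain e where e: "is_word e" "\<not> empty_word e" "word_eq P (wconcat c e)"
              "word_eq (wconcat (letter b) r') (wconcat e v)" by blast
            obtain k f g h where k: "k \<in> Field \<alpha>" and fgh: "is_word f" "is_word g" "is_word h" "\<not> empty_word g"
              "word_eq u (wconcat f g)" "word_eq c (wconcat (wpow u (Restr \<alpha> (underS \<alpha> k))) f)"
              "word_eq e (wconcat g h)"
              using PD[OF u \<alpha> cr(2) e(1) e(2)] e(3) P_def by blast
            define \<beta> where "\<beta> = Restr \<alpha> (underS \<alpha> k)"
            have \<beta>: "Well_order \<beta>" using Well_order_Restr[OF \<alpha>] \<beta>_def by simp
            have wPb: "is_word (wpow u \<beta>)" using word_pow[OF u \<beta>] .
            obtain h0 where h0: "starts g h0" using head[OF fgh(2) fgh(4)] by blast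
            have "starts e h0" using starts_weq[OF starts_cat1[OF fgh(2) h0 fgh(3)] fgh(7)] .
            hence "starts (wconcat (letter b) r') h0" using starts_eq_cat[OF e(1) _ v e(4)] by blast
            hence bh: "b = h0" using starts_unique[OF starts_letter[OF cr(4)]] by blast
            obtain g' where g': "is_word g'" "word_eq g (wconcat (letter b) g')"
              using h0 bh unfolding starts_def by blast
            have "word_eq v (wconcat (wconcat f g) t)" using congL[OF t(2) fgh(5) t(1)] .
            hence "word_eq v (wconcat f (wconcat g t))" by (rule assocR)
            hence "word_eq v (wconcat f (wconcat (wconcat (letter b) g') t))"
              using congR[OF _ weq_cong[OF g'(2) weq_refl[OF t(1)]] fgh(1)] by blast
            hence vB: "word_eq v (wconcat f (wconcat (letter b) (wconcat g' t)))"
              using congR[OF _ assoc fgh(1)] by blast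
            have "word_eq v (wconcat (wconcat (wpow u \<beta>) f) (wconcat (letter a) r))"
              using congL[OF cr(5) fgh(6) wAr] \<beta>_def by simp
            hence vA: "word_eq v (wconcat (wpow u \<beta>) (wconcat f (wconcat (letter a) r)))" by (rule assocR)
            define z where "z = wconcat f (wconcat (letter a) r)"
            have wz: "is_word z" using word_wc[OF fgh(1) wAr] z_def by simp
            have zs: "str_less z v"
              using str_lessI[OF cr(1) fgh(1) cr(3) word_wc[OF g'(1) t(1)] _ vB] weq_refl[OF wz] z_def by blast
            show False
            proof (cases "Field \<beta> = {}")
              case True
              have "word_eq v z" using weq_trans[OF vA left_unit[OF pow_empty[OF True]]] z_def by simp
              hence "word_eq (wconcat f (wconcat (letter a) r)) (wconcat f (wconcat (letter b) (wconcat g' t)))"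
                using weq_trans[OF weq_sym[OF _] vB] z_def by blast
              hence "word_eq (wconcat (letter a) r) (wconcat (letter b) (wconcat g' t))"
                using cancel[OF fgh(1) wAr word_wc[OF word_letter word_wc[OF g'(1) t(1)]]] by blast
              hence "a = b" using letter_inj[OF word_wc[OF g'(1) t(1)]] by blast
              thus False using cr(1) by simp
            next
              case False
              have "\<not> empty_word (wpow u \<beta>)" using pow_nonempty[OF u False une] .
              moreover have "\<not> empty_word z" unfolding z_def empty_wc by (simp add: empty_word_def)
              ultimately have "lex_le v z" using suf proper_suffixI[OF wz _ wPb] vA z_def by blast
              thus False using AS[OF v wz _ zs] by blast
            qed
          qed
        next
          assume "is_prefix v (wconcat P v)"
          then obtain s where s: "is_word s" "word_eq (wconcat P v) (wconcat v s)" unfolding is_prefix_def by blast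
          have sne: "\<not> empty_word s"
          proof
            assume "empty_word s"
            hence "word_eq v (wconcat (wconcat P v) emp)"
              using weq_sym[OF weq_trans[OF right_unit[OF empty_emp] weq_trans[OF s(2) right_unit]]] by blast
            thus False using nle word_emp unfolding is_prefix_def by blast
          qed
          show False using levi'[OF wP v v s(1) s(2)]
          proof
            assume "\<exists>e. is_word e \<and> word_eq v (wconcat P e) \<and> word_eq v (wconcat e s)"
            then obtain e where e: "is_word e" "word_eq v (wconcat P e)" "word_eq v (wconcat e s)" by blast
            show False
            proof (cases "empty_word e")
              case True
              have "word_eq v (wpow u \<alpha>)" using weq_trans[OF e(2) right_unit[OF True]] P_def by simp
              thus False using prim_use[OF pv u \<alpha>] nuv by blast
            next
              case False
              have "lex_le v e" using suf proper_suffixI[OF e(1) False wP Pne e(2)] by blast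
              thus False using NP[OF v e(1) s(1) sne e(3)] by blast
            qed
          next
            assume "\<exists>e. is_word e \<and> \<not> empty_word e \<and> word_eq P (wconcat v e) \<and> word_eq s (wconcat e v)"
            then obtain e where e: "is_word e" "\<not> empty_word e" "word_eq P (wconcat v e)" by blast
            obtain k f g h where k: "k \<in> Field \<alpha>" and fgh: "is_word f" "is_word g" "is_word h" "\<not> empty_word g"
              "word_eq u (wconcat f g)" "word_eq v (wconcat (wpow u (Restr \<alpha> (underS \<alpha> k))) f)"
              "word_eq e (wconcat g h)"
              using PD[OF u \<alpha> v e(1) e(2) e(3)[unfolded P_def]] by blast
            define \<beta> where "\<beta> = Restr \<alpha> (underS \<alpha> k)"
            have \<beta>: "Well_order \<beta>" using Well_order_Restr[OF \<alpha>] \<beta>_def by simp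
            have wPb: "is_word (wpow u \<beta>)" using word_pow[OF u \<beta>] .
            have vb: "word_eq v (wconcat (wpow u \<beta>) f)" using fgh(6) \<beta>_def by simp
            have "word_eq v (wconcat (wconcat f g) t)" using congL[OF t(2) fgh(5) t(1)] .
            hence vf: "word_eq v (wconcat f (wconcat g t))" by (rule assocR)
            have gtne: "\<not> empty_word (wconcat g t)" using fgh(4) empty_wc by blast
            have wgt: "is_word (wconcat g t)" using word_wc[OF fgh(2) t(1)] .
            show False
            proof (cases "Field \<beta> = {}")
              case True
              have "word_eq v f" using weq_trans[OF vb left_unit[OF pow_empty[OF True]]] .
              hence "word_eq f (wconcat f (wconcat g t))" using weq_trans[OF weq_sym vf] by blast
              hence "empty_word (wconcat g t)" using ext_empty[OF fgh(1) wgt] by blast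
              thus False using gtne by blast
            next
              case False
              show False
              proof (cases "empty_word f")
                case True
                have "word_eq v (wpow u \<beta>)" using weq_trans[OF vb right_unit[OF True]] .
                thus False using prim_use[OF pv u \<beta>] nuv by blast
              next
                case fne: False
                have "\<not> empty_word (wpow u \<beta>)" using pow_nonempty[OF u False une] .
                hence "lex_le v f" using suf proper_suffixI[OF fgh(1) fne wPb _ vb] by blast
                thus False using NP[OF v fgh(1) wgt gtne vf] by blast
              qed
            qed
          qed
        qed
      qed
    qed
  qed
  show ?thesis using part1 part2 P_def by simp
qed



end
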